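(* Let $\Omega\subset\mathbb{R}^d$ be Borel, $p>1$, $c$ a metric on $\Omega$, $\mathcal A\subset\mathcal P^c_p(\Omega)$, and let $\delta=W_p^c$ on $\mathcal A$. Assume (i) for all $a_0,a_1\in\mathcal A$ the optimal transport problem $\inf_{\gamma\in\Pi(a_0,a_1)}\int c(x,y)^p\,d\gamma$ has at least one minimizer, the set of minimizers being denoted $\Gamma^*_{a_0,a_1}$; and (ii) $\mathcal M(\mathcal A)$ is identifiable. Let $\Gamma(\mathcal A)$ be an admissible set of atom transport plans and $\Gamma_{\mathcal M}(\mathcal A)$ the set of its finite mixtures. Let $\mu_0=\sum_{j=1}^J\lambda_0^ja_0^j$ and $\mu_1=\sum_{k=1}^K\lambda_1^ka_1^k$ be in $\mathcal M(\mathcal A)$ and define $$\widetilde\delta_{\mathcal M,p}(\mu_0,\mu_1)=\Big(\inf_{\gamma\in\Pi(\mu_0,\mu_1)\cap\Gamma_{\mathcal M}(\mathcal A)}\int_{\Omega\times\Omega}c(x,y)^p\,d\gamma(x,y)\Big)^{1/p}.$$ Then $\widetilde\delta_{\mathcal M,p}(\mu_0,\mu_1)=\delta_{\mathcal M,p}(\mu_0,\mu_1)$. Moreover, the set of minimizers of the problem defining $\widetilde\delta_{\mathcal M,p}(\mu_0,\mu_1)$ is equal to the set of measures of the form $\gamma=\sum_{j=1}^J\sum_{k=1}^K w^*_{jk}\gamma_{jk}$ where $w^*$ is a minimizer of the discrete problem defining $\delta_{\mathcal M,p}(\mu_0,\mu_1)$ and $\gamma_{jk}\in\Gamma^*_{a_0^j,a_1^k}$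 for all $j,k$.
   Context: $\mathcal P^c_p(\Omega)$ is the set of probability measures $\mu$ on $\Omega$ with $\int c(x,x_0)^pd\mu(x)<\infty$ for some $x_0$. $\Pi(\mu,\nu)$ is the set of probability measures on $\Omega\times\Omega$ with marginals $\mu,\nu$, and $W_p^c(\mu,\nu)=(\inf_{\gamma\in\Pi(\mu,\nu)}\int c^p d\gamma)^{1/p}$. $\mathcal L_K$ is the probability simplex in $\mathbb{R}^K$. $\mathcal M(\mathcal A)$ is the set of finite mixtures $\sum_{k=1}^K\lambda^ka^k$, $a^k\in\mathcal A$, $(\lambda^k)\in\mathcal L_K$. For such $\mu_0,\mu_1$, $\delta_{\mathcal M,p}(\mu_0,\mu_1)^p=\min_{w}\sum_{j,k}w_{jk}W_p^c(a_0^j,a_1^k)^p$ over $w\in\mathbb{R}_+^{J\times K}$ with row sums $\lambda_0^j$ and column sums $\lambda_1^k$. Identifiability: whenever $\sum_{j=1}^J\lambda_0^ja_0^j=\sum_{k=1}^K\lambda_1^ka_1^k$ with the $a_0^j$ pairwise distinct and the $a_1^k$ pairwise distinct, then $J=K$ and after reordering $\lambda_0^k=\lambda_1^k$, $a_0^k=a_1^k$ for all $k$. An admissible set of atom transport plans is a set $\Gamma(\mathcal A)=\bigcup_{a_0,a_1\in\mathcal A}\Gamma_{a_0,a_1}\subset\mathcal P(\Omega\times\Omega)$ where each $\Gamma_{a_0,a_1}$ is a convex set with $\Gamma^*_{a_0,a_1}\subset\Gamma_{a_0,a_1}\subset\Pi(a_0,a_1)$. $\Gamma_{\mathcal M}(\mathcal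 A)$ is the set of measures $\sum_{k=1}^K\lambda^k\gamma^k$ with $K\in\mathbb{N}^*$, $\gamma^k\in\Gamma(\mathcal A)$, $(\lambda^k)\in\mathcal L_K$. *)

theory Defs
  imports "HOL-Probability.Probability"
begin

text \<open>Probability measures on a Borel set \<Omega> of a Euclidean space are represented as
  probability measures on the Borel sets of the whole space that are concentrated on \<Omega>.\<close>

definition is_metric_on :: "'a set \<Rightarrow> ('a \<Rightarrow> 'a \<Rightarrow> real) \<Rightarrow> bool" where
  "is_metric_on \<Omega> c \<longleftrightarrow>
     (\<forall>x\<in>\<Omega>. \<forall>y\<in>\<Omega>. (c x y = 0 \<longleftrightarrow> x = y) \<and> c x y = c y x) \<and>
     (\<forall>x\<in>\<Omega>. \<forall>y\<in>\<Omega>. \<forall>z\<in>\<Omega>. c x z \<le> c x y + c y z)"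

definition prob_on :: "'a::topological_space set \<Rightarrow> 'a measure set" where
  "prob_on \<Omega> = {M. prob_space M \<and> sets M = sets borel \<and> emeasure M (UNIV - \<Omega>) = 0}"

definition Pp :: "'a::topological_space set \<Rightarrow> ('a \<Rightarrow> 'a \<Rightarrow> real) \<Rightarrow> real \<Rightarrow> 'a measure set" where
  "Pp \<Omega> c p = {M \<in> prob_on \<Omega>.
      \<exists>x0\<in>\<Omega>. (\<integral>\<^sup>+ x. indicator \<Omega> x * ennreal (c x x0 powr p) \<partial>M) < \<infinity>}"

definition mix :: "'i set \<Rightarrow> ('i \<Rightarrow> real) \<Rightarrow> ('i \<Rightarrow> 'b::topological_space measure) \<Rightarrow> 'b measure" where
  "mix I w m = measure_of UNIV (sets borel) (\<lambda>A. \<Sum>i\<in>I. ennreal (w i) * emeasure (m i) A)"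

definition prob_simplex :: "'i set \<Rightarrow> ('i \<Rightarrow> real) set" where
  "prob_simplex I = {w. (\<forall>i\<in>I. 0 \<le> w i) \<and> (\<Sum>i\<in>I. w i) = 1}"

definition couplings :: "'a::topological_space measure \<Rightarrow> 'a measure \<Rightarrow> ('a \<times> 'a) measure set" where
  "couplings \<mu> \<nu> = {\<gamma>. prob_space \<gamma> \<and> sets \<gamma> = sets borel \<and>
      distr \<gamma> borel fst = \<mu> \<and> distr \<gamma> borel snd = \<nu>}"

definition tcost :: "'a set \<Rightarrow> ('a \<Rightarrow> 'a \<Rightarrow> real) \<Rightarrow> real \<Rightarrow> ('a \<times> 'a) measure \<Rightarrow> ennreal" where
  "tcost \<Omega> c p \<gamma> = (\<integral>\<^sup>+ z. indicator (\<Omega> \<times> \<Omega>) z * ennreal (c (fst z) (snd z) powr p) \<partial>\<gamma>)"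

definition OTval :: "'a::topological_space set \<Rightarrow> ('a \<Rightarrow> 'a \<Rightarrow> real) \<Rightarrow> real \<Rightarrow> 'a measure \<Rightarrow> 'a measure \<Rightarrow> ennreal" where
  "OTval \<Omega> c p \<mu> \<nu> = (INF \<gamma>\<in>couplings \<mu> \<nu>. tcost \<Omega> c p \<gamma>)"

definition Wp :: "'a::topological_space set \<Rightarrow> ('a \<Rightarrow> 'a \<Rightarrow> real) \<Rightarrow> real \<Rightarrow> 'a measure \<Rightarrow> 'a measure \<Rightarrow> real" where
  "Wp \<Omega> c p \<mu> \<nu> = enn2real (OTval \<Omega> c p \<mu> \<nu>) powr (1 / p)"

definition opt_plans :: "'a::topological_space set \<Rightarrow> ('a \<Rightarrow> 'a \<Rightarrow> real) \<Rightarrow> real \<Rightarrow> 'a measure \<Rightarrow> 'a measure \<Rightarrow> ('a \<times> 'a) measure set" where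
  "opt_plans \<Omega> c p \<mu> \<nu> = {\<gamma> \<in> couplings \<mu> \<nu>. tcost \<Omega> c p \<gamma> = OTval \<Omega> c p \<mu> \<nu>}"

definition mixtures :: "'b::topological_space measure set \<Rightarrow> 'b measure set" where
  "mixtures \<A> = {mix {..<K} lam a | (K::nat) lam a. 0 < K \<and> lam \<in> prob_simplex {..<K} \<and> (\<forall>k<K. a k \<in> \<A>)}"

definition identifiable :: "'b::topological_space measure set \<Rightarrow> bool" where
  "identifiable \<A> \<longleftrightarrow>
    (\<forall>(J::nat) (K::nat) lam0 a0 lam1 a1.
       0 < J \<and> 0 < K \<and>
       lam0 \<in> prob_simplex {..<J} \<and> (\<forall>j<J. 0 < lam0 j \<and> a0 j \<in> \<A>) \<and> inj_on a0 {..<J} \<and>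
       lam1 \<in> prob_simplex {..<K} \<and> (\<forall>k<K. 0 < lam1 k \<and> a1 k \<in> \<A>) \<and> inj_on a1 {..<K} \<and>
       mix {..<J} lam0 a0 = mix {..<K} lam1 a1
     \<longrightarrow> J = K \<and> (\<exists>\<sigma>. \<sigma> permutes {..<K} \<and>
                         (\<forall>k<K. lam0 (\<sigma> k) = lam1 k \<and> a0 (\<sigma> k) = a1 k)))"

definition convex_meas :: "'b::topological_space measure set \<Rightarrow> bool" where
  "convex_meas S \<longleftrightarrow> (\<forall>\<gamma>0\<in>S. \<forall>\<gamma>1\<in>S. \<forall>t::real. 0 \<le> t \<and> t \<le> 1 \<longrightarrow>
      mix {0::nat, 1} (\<lambda>i. if i = 0 then 1 - t else t) (\<lambda>i. if i = 0 then \<gamma>0 else \<gamma>1) \<in> S)"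

definition admissible :: "'a::topological_space set \<Rightarrow> ('a \<Rightarrow> 'a \<Rightarrow> real) \<Rightarrow> real \<Rightarrow> 'a measure set \<Rightarrow>
    ('a measure \<Rightarrow> 'a measure \<Rightarrow> ('a \<times> 'a) measure set) \<Rightarrow> bool" where
  "admissible \<Omega> c p \<A> G \<longleftrightarrow> (\<forall>a0\<in>\<A>. \<forall>a1\<in>\<A>.
      convex_meas (G a0 a1) \<and> opt_plans \<Omega> c p a0 a1 \<subseteq> G a0 a1 \<and> G a0 a1 \<subseteq> couplings a0 a1)"

definition Gam_all :: "'a measure set \<Rightarrow> ('a measure \<Rightarrow> 'a measure \<Rightarrow> ('a \<times> 'a) measure set) \<Rightarrow> ('a \<times> 'a) measure set" where
  "Gam_all \<A> G = (\<Union>a0\<in>\<A>. \<Union>a1\<in>\<A>. G a0 a1)"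

definition Gam_mix :: "'a::topological_space measure set \<Rightarrow> ('a measure \<Rightarrow> 'a measure \<Rightarrow> ('a \<times> 'a) measure set) \<Rightarrow> ('a \<times> 'a) measure set" where
  "Gam_mix \<A> G = mixtures (Gam_all \<A> G)"

definition disc_plans :: "nat \<Rightarrow> nat \<Rightarrow> (nat \<Rightarrow> real) \<Rightarrow> (nat \<Rightarrow> real) \<Rightarrow> (nat \<Rightarrow> nat \<Rightarrow> real) set" where
  "disc_plans J K lam0 lam1 = {w. (\<forall>j<J. \<forall>k<K. 0 \<le> w j k) \<and>
      (\<forall>j<J. (\<Sum>k<K. w j k) = lam0 j) \<and> (\<forall>k<K. (\<Sum>j<J. w j k) = lam1 k)}"

definition disc_cost :: "'a::topological_space set \<Rightarrow> ('a \<Rightarrow> 'a \<Rightarrow> real) \<Rightarrow> real \<Rightarrow> nat \<Rightarrow> nat \<Rightarrow>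
    (nat \<Rightarrow> 'a measure) \<Rightarrow> (nat \<Rightarrow> 'a measure) \<Rightarrow> (nat \<Rightarrow> nat \<Rightarrow> real) \<Rightarrow> real" where
  "disc_cost \<Omega> c p J K a0 a1 w = (\<Sum>j<J. \<Sum>k<K. w j k * (Wp \<Omega> c p (a0 j) (a1 k)) powr p)"

definition delta_M :: "'a::topological_space set \<Rightarrow> ('a \<Rightarrow> 'a \<Rightarrow> real) \<Rightarrow> real \<Rightarrow> nat \<Rightarrow> nat \<Rightarrow>
    (nat \<Rightarrow> real) \<Rightarrow> (nat \<Rightarrow> 'a measure) \<Rightarrow> (nat \<Rightarrow> real) \<Rightarrow> (nat \<Rightarrow> 'a measure) \<Rightarrow> real" where
  "delta_M \<Omega> c p J K lam0 a0 lam1 a1 =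
     (Inf (disc_cost \<Omega> c p J K a0 a1 ` disc_plans J K lam0 lam1)) powr (1 / p)"

definition disc_minimizers :: "'a::topological_space set \<Rightarrow> ('a \<Rightarrow> 'a \<Rightarrow> real) \<Rightarrow> real \<Rightarrow> nat \<Rightarrow> nat \<Rightarrow>
    (nat \<Rightarrow> real) \<Rightarrow> (nat \<Rightarrow> 'a measure) \<Rightarrow> (nat \<Rightarrow> real) \<Rightarrow> (nat \<Rightarrow> 'a measure) \<Rightarrow> (nat \<Rightarrow> nat \<Rightarrow> real) set" where
  "disc_minimizers \<Omega> c p J K lam0 a0 lam1 a1 =
     {w \<in> disc_plans J K lam0 lam1.
        disc_cost \<Omega> c p J K a0 a1 w = Inf (disc_cost \<Omega> c p J K a0 a1 ` disc_plans J K lam0 lam1)}"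

definition delta_tilde :: "'a::topological_space set \<Rightarrow> ('a \<Rightarrow> 'a \<Rightarrow> real) \<Rightarrow> real \<Rightarrow> 'a measure set \<Rightarrow>
    ('a measure \<Rightarrow> 'a measure \<Rightarrow> ('a \<times> 'a) measure set) \<Rightarrow> 'a measure \<Rightarrow> 'a measure \<Rightarrow> real" where
  "delta_tilde \<Omega> c p \<A> G \<mu>0 \<mu>1 =
     enn2real (INF \<gamma>\<in>couplings \<mu>0 \<mu>1 \<inter> Gam_mix \<A> G. tcost \<Omega> c p \<gamma>) powr (1 / p)"

definition tilde_minimizers :: "'a::topological_space set \<Rightarrow> ('a \<Rightarrow> 'a \<Rightarrow> real) \<Rightarrow> real \<Rightarrow> 'a measure set \<Rightarrow>
    ('a measure \<Rightarrow> 'a measure \<Rightarrow> ('a \<times> 'a) measure set) \<Rightarrow> 'a measure \<Rightarrow> 'a measure \<Rightarrow> ('a \<times> 'a) measure set" where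
  "tilde_minimizers \<Omega> c p \<A> G \<mu>0 \<mu>1 =
     {\<gamma> \<in> couplings \<mu>0 \<mu>1 \<inter> Gam_mix \<A> G.
        tcost \<Omega> c p \<gamma> = (INF \<gamma>'\<in>couplings \<mu>0 \<mu>1 \<inter> Gam_mix \<A> G. tcost \<Omega> c p \<gamma>')}"

end

theory Submission
  imports Defs
begin


lemma mix_sets[simp]: "sets (mix I w m) = sets borel"
  unfolding mix_def using sets.sigma_sets_eq[of borel] by (simp add: sets_measure_of_conv)

lemma mix_space[simp]: "space (mix I w m) = UNIV"
  unfolding mix_def by (simp add: space_measure_of_conv)

lemma emeasure_mix:
  assumes I: "finite I" and m: "\<And>i. i \<in> I \<Longrightarrow> sets (m i) = sets borel" and A: "A \<in> sets borel"
  shows "emeasure (mix I w m) A = (\<Sum>i\<in>I. ennreal (w i) * emeasure (m i) A)"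
  unfolding mix_def
proof (rule emeasure_measure_of_sigma)
  show "sigma_algebra UNIV (sets borel)"
    using sets.sigma_algebra_axioms[of borel] by simp
  show "positive (sets borel) (\<lambda>A. \<Sum>i\<in>I. ennreal (w i) * emeasure (m i) A)"
    by (simp add: positive_def)
  show "countably_additive (sets borel) (\<lambda>A. \<Sum>i\<in>I. ennreal (w i) * emeasure (m i) A)"
    unfolding countably_additive_def
  proof (intro allI impI)
    fix F :: "nat \<Rightarrow> 'b set" assume F: "range F \<subseteq> sets borel" "disjoint_family F"
    have "(\<Sum>n. \<Sum>i\<in>I. ennreal (w i) * emeasure (m i) (F n)) = (\<Sum>i\<in>I. \<Sum>n. ennreal (w i) * emeasure (m i) (F n))"
      by (rule suminf_sum) simp
    also have "\<dots> = (\<Sum>i\<in>I. ennreal (w i) * emeasure (m i) (\<Union>n. F n))"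
      using F m by (intro sum.cong refl) (simp add: suminf_emeasure)
    finally show "(\<Sum>n. \<Sum>i\<in>I. ennreal (w i) * emeasure (m i) (F n)) = (\<Sum>i\<in>I. ennreal (w i) * emeasure (m i) (\<Union>n. F n))" .
  qed
qed (use A in simp)

lemma nn_integral_mix:
  assumes I: "finite I" and m: "\<And>i. i \<in> I \<Longrightarrow> sets (m i) = sets borel"
    and f: "f \<in> borel_measurable borel"
  shows "(\<integral>\<^sup>+x. f x \<partial>mix I w m) = (\<Sum>i\<in>I. ennreal (w i) * (\<integral>\<^sup>+x. f x \<partial>m i))"
  using f
proof induction
  case (cong f g)
  have "\<And>i. i \<in> I \<Longrightarrow> (\<integral>\<^sup>+x. f x \<partial>m i) = (\<integral>\<^sup>+x. g x \<partial>m i)"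
    using cong m by (intro nn_integral_cong) (simp add: sets_eq_imp_space_eq)
  moreover have "(\<integral>\<^sup>+x. f x \<partial>mix I w m) = (\<integral>\<^sup>+x. g x \<partial>mix I w m)"
    using cong by (intro nn_integral_cong) simp
  ultimately show ?case using cong by simp
next
  case (set A)
  have "(\<integral>\<^sup>+x. indicator A x \<partial>mix I w m) = emeasure (mix I w m) A"
    using set by (intro nn_integral_indicator) simp
  also have "\<dots> = (\<Sum>i\<in>I. ennreal (w i) * emeasure (m i) A)"
    using set I m by (simp add: emeasure_mix)
  also have "\<dots> = (\<Sum>i\<in>I. ennreal (w i) * (\<integral>\<^sup>+x. indicator A x \<partial>m i))"
    using set m by (intro sum.cong refl) (simp add: nn_integral_indicator)
  finally show ?case .
next
  case (mult u c)
  have mu: "u \<in> borel_measurable (mix I w m)" using mult measurable_cong_sets[OF mix_sets refl] by blast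
  have mi: "\<And>i. i \<in> I \<Longrightarrow> u \<in> borel_measurable (m i)" using mult m measurable_cong_sets[OF _ refl] by metis
  show ?case
    using mult mu mi by (simp add: nn_integral_cmult sum_distrib_left mult.left_commute cong: sum.cong)
next
  case (add u v)
  have mu: "u \<in> borel_measurable (mix I w m)" "v \<in> borel_measurable (mix I w m)"
    using add measurable_cong_sets[OF mix_sets refl] by blast+
  have mi: "\<And>i. i \<in> I \<Longrightarrow> u \<in> borel_measurable (m i)" "\<And>i. i \<in> I \<Longrightarrow> v \<in> borel_measurable (m i)"
    using add m measurable_cong_sets[OF _ refl] by metis+
  show ?case
    using add mu mi by (simp add: nn_integral_add sum.distrib distrib_left cong: sum.cong)
next
  case (seq U)
  have mu: "\<And>i. U i \<in> borel_measurable (mix I w m)"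
    using seq measurable_cong_sets[OF mix_sets refl] by blast
  have mi: "\<And>i j. i \<in> I \<Longrightarrow> U j \<in> borel_measurable (m i)"
    using seq m measurable_cong_sets[OF _ refl] by metis
  have "(\<integral>\<^sup>+x. (SUP j. U j) x \<partial>mix I w m) = (SUP j. \<integral>\<^sup>+x. U j x \<partial>mix I w m)"
    using nn_integral_monotone_convergence_SUP[OF seq(3) mu] by (simp add: image_comp)
  also have "\<dots> = (SUP j. \<Sum>i\<in>I. ennreal (w i) * (\<integral>\<^sup>+x. U j x \<partial>m i))"
    using seq by simp
  also have "\<dots> = (\<Sum>i\<in>I. SUP j. ennreal (w i) * (\<integral>\<^sup>+x. U j x \<partial>m i))"
  proof (rule ennreal_SUP_sum)
    fix i assume "i \<in> I"
    show "incseq (\<lambda>j. ennreal (w i) * (\<integral>\<^sup>+x. U j x \<partial>m i))"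
      using seq(3) unfolding incseq_def
      by (auto intro!: mult_left_mono nn_integral_mono simp: le_fun_def)
  qed
  also have "\<dots> = (\<Sum>i\<in>I. ennreal (w i) * (\<integral>\<^sup>+x. (SUP j. U j) x \<partial>m i))"
  proof (intro sum.cong refl)
    fix i assume i: "i \<in> I"
    have "(\<integral>\<^sup>+x. (SUP j. U j) x \<partial>m i) = (SUP j. \<integral>\<^sup>+x. U j x \<partial>m i)"
      using nn_integral_monotone_convergence_SUP[OF seq(3) mi[OF i]] by (simp add: image_comp)
    then show "(SUP j. ennreal (w i) * (\<integral>\<^sup>+x. U j x \<partial>m i)) = ennreal (w i) * (\<integral>\<^sup>+x. (SUP j. U j) x \<partial>m i)"
      by (simp add: SUP_mult_left_ennreal)
  qed
  finally show ?case .
qed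

lemma emeasure_mix_real:
  assumes I: "finite I" and m: "\<And>i. i \<in> I \<Longrightarrow> sets (m i) = sets borel"
    and pm: "\<And>i. i \<in> I \<Longrightarrow> prob_space (m i)" and w: "\<And>i. i \<in> I \<Longrightarrow> 0 \<le> w i"
    and A: "A \<in> sets borel"
  shows "emeasure (mix I w m) A = ennreal (\<Sum>i\<in>I. w i * measure (m i) A)"
proof -
  have "emeasure (mix I w m) A = (\<Sum>i\<in>I. ennreal (w i) * emeasure (m i) A)"
    using emeasure_mix[OF I m A] by simp
  also have "\<dots> = (\<Sum>i\<in>I. ennreal (w i * measure (m i) A))"
    using pm w by (intro sum.cong refl) (simp add: finite_measure.emeasure_eq_measure[OF prob_space.axioms(1)] ennreal_mult)
  also have "\<dots> = ennreal (\<Sum>i\<in>I. w i * measure (m i) A)"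
    using w by (intro sum_ennreal) (simp add: measure_nonneg)
  finally show ?thesis .
qed

lemma measure_mix_real:
  assumes I: "finite I" and m: "\<And>i. i \<in> I \<Longrightarrow> sets (m i) = sets borel"
    and pm: "\<And>i. i \<in> I \<Longrightarrow> prob_space (m i)" and w: "\<And>i. i \<in> I \<Longrightarrow> 0 \<le> w i"
    and A: "A \<in> sets borel"
  shows "measure (mix I w m) A = (\<Sum>i\<in>I. w i * measure (m i) A)"
  using emeasure_mix_real[OF assms] unfolding measure_def
  by (simp add: sum_nonneg w measure_nonneg)

lemma mix_eqI:
  assumes "\<And>A. A \<in> sets borel \<Longrightarrow> emeasure (mix I w m) A = emeasure (mix I' w' m') A"
  shows "mix I w m = mix I' w' m'"
  using assms by (intro measure_eqI) simp_all

lemma prob_space_mix: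
  assumes I: "finite I" and m: "\<And>i. i \<in> I \<Longrightarrow> sets (m i) = sets borel"
    and pm: "\<And>i. i \<in> I \<Longrightarrow> prob_space (m i)" and w: "w \<in> prob_simplex I"
  shows "prob_space (mix I w m)"
proof (rule prob_spaceI)
  have "emeasure (mix I w m) UNIV = ennreal (\<Sum>i\<in>I. w i * measure (m i) UNIV)"
    using w by (intro emeasure_mix_real[OF I m pm]) (auto simp: prob_simplex_def)
  also have "\<dots> = 1"
  proof -
    have "\<And>i. i \<in> I \<Longrightarrow> measure (m i) UNIV = 1"
      using pm m by (metis prob_space.prob_space sets_eq_imp_space_eq space_borel)
    then show ?thesis using w by (simp add: prob_simplex_def)
  qed
  finally show "emeasure (mix I w m) (space (mix I w m)) = 1" by simp
qed

lemma distr_mix: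
  assumes I: "finite I" and m: "\<And>i. i \<in> I \<Longrightarrow> sets (m i) = sets borel"
    and f: "f \<in> borel_measurable borel"
  shows "distr (mix I w m) borel f = mix I w (\<lambda>i. distr (m i) borel f)"
proof (rule measure_eqI)
  fix A :: "'c set" assume "A \<in> sets (distr (mix I w m) borel f)"
  then have A: "A \<in> sets borel" by simp
  have fm: "f \<in> measurable (mix I w m) borel" using f measurable_cong_sets[OF mix_sets refl] by blast
  have fi: "\<And>i. i \<in> I \<Longrightarrow> f \<in> measurable (m i) borel" using f m measurable_cong_sets[OF _ refl] by metis
  have pre: "f -` A \<in> sets borel" using f A by (metis measurable_sets space_borel Int_UNIV_right)
  have "emeasure (distr (mix I w m) borel f) A = emeasure (mix I w m) (f -` A)"
    using emeasure_distr[OF fm A] by simp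
  also have "\<dots> = (\<Sum>i\<in>I. ennreal (w i) * emeasure (m i) (f -` A))"
    by (rule emeasure_mix[OF I m pre])
  also have "\<dots> = (\<Sum>i\<in>I. ennreal (w i) * emeasure (distr (m i) borel f) A)"
    using fi A m by (intro sum.cong refl) (simp add: emeasure_distr sets_eq_imp_space_eq)
  also have "\<dots> = emeasure (mix I w (\<lambda>i. distr (m i) borel f)) A"
    using A I by (intro emeasure_mix[symmetric]) simp_all
  finally show "emeasure (distr (mix I w m) borel f) A = emeasure (mix I w (\<lambda>i. distr (m i) borel f)) A" .
qed simp

lemma OO_sets:
  assumes "(\<Omega>::'a::euclidean_space set) \<in> sets borel"
  shows "\<Omega> \<times> \<Omega> \<in> sets (borel :: ('a \<times> 'a) measure)"
  using assms by (metis borel_prod pair_measureI)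

lemma tcost_integrand_meas:
  fixes \<Omega> :: "'a::euclidean_space set"
  assumes O: "\<Omega> \<in> sets borel"
    and c_meas: "(\<lambda>z. c (fst z) (snd z)) \<in> borel_measurable (restrict_space borel (\<Omega> \<times> \<Omega>))"
  shows "(\<lambda>z. indicator (\<Omega> \<times> \<Omega>) z * ennreal (c (fst z) (snd z) powr p)) \<in> borel_measurable borel"
proof -
  have "(\<lambda>z. ennreal (c (fst z) (snd z) powr p)) \<in> borel_measurable (restrict_space borel (\<Omega> \<times> \<Omega>))"
    using c_meas by measurable
  then have "(\<lambda>z. ennreal (c (fst z) (snd z) powr p) * indicator (\<Omega> \<times> \<Omega>) z) \<in> borel_measurable borel"
    using OO_sets[OF O] by (subst (asm) borel_measurable_restrict_space_iff_ennreal) simp_all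
  then show ?thesis by (simp add: mult.commute)
qed

lemma tcost_mix:
  fixes \<Omega> :: "'a::euclidean_space set"
  assumes O: "\<Omega> \<in> sets borel"
    and c_meas: "(\<lambda>z. c (fst z) (snd z)) \<in> borel_measurable (restrict_space borel (\<Omega> \<times> \<Omega>))"
    and I: "finite I" and m: "\<And>i. i \<in> I \<Longrightarrow> sets (m i) = sets borel"
  shows "tcost \<Omega> c p (mix I w m) = (\<Sum>i\<in>I. ennreal (w i) * tcost \<Omega> c p (m i))"
  unfolding tcost_def by (rule nn_integral_mix[OF I m tcost_integrand_meas[OF O c_meas]])

lemma product_coupling:
  fixes a b :: "'a::euclidean_space measure"
  assumes pa: "prob_space a" and pb: "prob_space b" and sa: "sets a = sets borel" and sb: "sets b = sets borel"
  shows "a \<Otimes>\<^sub>M b \<in> couplings a b"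
proof -
  interpret pair_prob_space a b using pa pb by (simp add: pair_prob_space_def pair_sigma_finite_def prob_space_imp_sigma_finite)
  have sp: "space a = UNIV" "space b = UNIV" using sa sb by (metis sets_eq_imp_space_eq space_borel)+
  have sets: "sets (a \<Otimes>\<^sub>M b) = sets (borel :: ('a \<times> 'a) measure)"
    using sets_pair_measure_cong[OF sa sb] borel_prod by metis
  have mf: "fst \<in> measurable (a \<Otimes>\<^sub>M b) borel" "snd \<in> measurable (a \<Otimes>\<^sub>M b) borel"
    using measurable_fst[of a b] measurable_snd[of a b] measurable_cong_sets[OF refl sa, of "a \<Otimes>\<^sub>M b"]
      measurable_cong_sets[OF refl sb, of "a \<Otimes>\<^sub>M b"] by auto
  have d1: "distr (a \<Otimes>\<^sub>M b) borel fst = a"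
  proof (rule measure_eqI)
    fix A :: "'a set" assume "A \<in> sets (distr (a \<Otimes>\<^sub>M b) borel fst)"
    then have A: "A \<in> sets a" using sa by simp
    have "emeasure (distr (a \<Otimes>\<^sub>M b) borel fst) A = emeasure (a \<Otimes>\<^sub>M b) (A \<times> space b)"
      using A sa sp by (subst emeasure_distr[OF mf(1)]) (auto simp: space_pair_measure intro!: arg_cong2[where f=emeasure])
    also have "\<dots> = emeasure a A"
      using M2.emeasure_pair_measure_Times[OF A sets.top] by (simp add: M2.emeasure_space_1)
    finally show "emeasure (distr (a \<Otimes>\<^sub>M b) borel fst) A = emeasure a A" .
  qed (simp add: sa)
  have d2: "distr (a \<Otimes>\<^sub>M b) borel snd = b"
  proof (rule measure_eqI)
    fix A :: "'a set" assume "A \<in> sets (distr (a \<Otimes>\<^sub>M b) borel snd)"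
    then have A: "A \<in> sets b" using sb by simp
    have "emeasure (distr (a \<Otimes>\<^sub>M b) borel snd) A = emeasure (a \<Otimes>\<^sub>M b) (space a \<times> A)"
      using A sb sp by (subst emeasure_distr[OF mf(2)]) (auto simp: space_pair_measure intro!: arg_cong2[where f=emeasure])
    also have "\<dots> = emeasure b A"
      using M2.emeasure_pair_measure_Times[OF sets.top[of a] A] by (simp add: M1.emeasure_space_1)
    finally show "emeasure (distr (a \<Otimes>\<^sub>M b) borel snd) A = emeasure b A" .
  qed (simp add: sb)
  show ?thesis unfolding couplings_def using d1 d2 sets P.prob_space_axioms by simp
qed

lemma c_nonneg:
  assumes "is_metric_on \<Omega> c" "x \<in> \<Omega>" "y \<in> \<Omega>"
  shows "0 \<le> c x y"
proof -
  have "c x x \<le> c x y + c y x" "c x x = 0" "c y x = c x y"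
    using assms unfolding is_metric_on_def by blast+
  then show ?thesis by linarith
qed

lemma pow3:
  fixes t u v w p :: real
  assumes "0 \<le> u" "0 \<le> v" "0 \<le> w" "0 \<le> t" "t \<le> u + v + w" "0 < p"
  shows "t powr p \<le> 3 powr p * (u powr p + v powr p + w powr p)"
proof -
  define M where "M = max u (max v w)"
  have M0: "0 \<le> M" using assms by (simp add: M_def)
  have "t \<le> 3 * M" using assms by (simp add: M_def)
  then have "t powr p \<le> (3 * M) powr p" using assms by (intro powr_mono2) auto
  also have "\<dots> = 3 powr p * M powr p" using M0 by (simp add: powr_mult)
  also have "M powr p \<le> u powr p + v powr p + w powr p"
    unfolding M_def by (auto simp: max_def)
  then have "3 powr p * M powr p \<le> 3 powr p * (u powr p + v powr p + w powr p)"
    by (intro mult_left_mono) auto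
  finally show ?thesis .
qed

lemma OTval_finite:
  fixes \<Omega> :: "'a::euclidean_space set"
  assumes O: "\<Omega> \<in> sets borel" and cm: "is_metric_on \<Omega> c"
    and c_meas: "(\<lambda>z. c (fst z) (snd z)) \<in> borel_measurable (restrict_space borel (\<Omega> \<times> \<Omega>))"
    and p: "0 < p" and a: "a \<in> Pp \<Omega> c p" and b: "b \<in> Pp \<Omega> c p"
  shows "OTval \<Omega> c p a b < \<infinity>"
proof -
  obtain x0 where x0: "x0 \<in> \<Omega>" and Ia: "(\<integral>\<^sup>+ x. indicator \<Omega> x * ennreal (c x x0 powr p) \<partial>a) < \<infinity>"
    using a unfolding Pp_def by blast
  obtain y0 where y0: "y0 \<in> \<Omega>" and Ib: "(\<integral>\<^sup>+ x. indicator \<Omega> x * ennreal (c x y0 powr p) \<partial>b) < \<infinity>"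
    using b unfolding Pp_def by blast
  have pa: "prob_space a" "sets a = sets borel" and pb: "prob_space b" "sets b = sets borel"
    using a b unfolding Pp_def prob_on_def by auto
  define \<gamma> where "\<gamma> = a \<Otimes>\<^sub>M b"
  have g: "\<gamma> \<in> couplings a b" unfolding \<gamma>_def using product_coupling pa pb by blast
  then have gs: "sets \<gamma> = sets borel" and gp: "prob_space \<gamma>"
    and gd: "distr \<gamma> borel fst = a" "distr \<gamma> borel snd = b"
    unfolding couplings_def by auto
  define h where "h = (\<lambda>z. indicator (\<Omega> \<times> \<Omega>) z * ennreal (c (fst z) (snd z) powr p))"
  have hm: "h \<in> borel_measurable borel" unfolding h_def by (rule tcost_integrand_meas[OF O c_meas])
  define F where "F = (\<lambda>x. indicator \<Omega> x * ennreal (c x x0 powr p))"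
  define H where "H = (\<lambda>x. indicator \<Omega> x * ennreal (c x y0 powr p))"
  have pairm: "\<And>y0::'a. (\<lambda>x. (x, y0)) \<in> measurable (borel :: 'a measure) borel"
  proof -
    fix y0 :: 'a
    have "(\<lambda>x. (x, y0)) \<in> measurable (borel :: 'a measure) (borel \<Otimes>\<^sub>M borel)" by measurable
    then show "(\<lambda>x. (x, y0)) \<in> measurable (borel :: 'a measure) borel" unfolding borel_prod .
  qed
  have Fm: "F \<in> borel_measurable borel"
  proof -
    have "(\<lambda>x. h (x, x0)) \<in> borel_measurable borel" using measurable_compose[OF pairm hm] .
    moreover have "(\<lambda>x. h (x, x0)) = F" using x0 unfolding h_def F_def by (auto simp: indicator_def fun_eq_iff)
    ultimately show ?thesis by simp
  qed
  have Hm: "H \<in> borel_measurable borel"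
  proof -
    have "(\<lambda>x. h (x, y0)) \<in> borel_measurable borel" using measurable_compose[OF pairm hm] .
    moreover have "(\<lambda>x. h (x, y0)) = H" using y0 unfolding h_def H_def by (auto simp: indicator_def fun_eq_iff)
    ultimately show ?thesis by simp
  qed
  have fstm: "fst \<in> measurable \<gamma> borel" "snd \<in> measurable \<gamma> borel"
    using measurable_cong_sets[OF gs refl, of "borel :: 'a measure"] measurable_fst measurable_snd borel_prod
    by (metis measurable_cong_sets refl gs)+
  have Fg: "(\<integral>\<^sup>+z. F (fst z) \<partial>\<gamma>) = (\<integral>\<^sup>+x. F x \<partial>a)"
    using nn_integral_distr[OF fstm(1), of F] Fm gd measurable_cong_sets[OF pa(2) refl] by metis
  have Hg: "(\<integral>\<^sup>+z. H (snd z) \<partial>\<gamma>) = (\<integral>\<^sup>+x. H x \<partial>b)"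
    using nn_integral_distr[OF fstm(2), of H] Hm gd measurable_cong_sets[OF pb(2) refl] by metis
  define V where "V = ennreal (c x0 y0 powr p)"
  have pt: "h z \<le> ennreal (3 powr p) * (F (fst z) + V + H (snd z))" for z
  proof (cases "z \<in> \<Omega> \<times> \<Omega>")
    case True
    obtain x y where z: "z = (x, y)" by (cases z)
    have xy: "x \<in> \<Omega>" "y \<in> \<Omega>" using True z by auto
    have tri: "c x y \<le> c x x0 + c x0 y0 + c y y0"
    proof -
      have "c x y \<le> c x x0 + c x0 y" "c x0 y \<le> c x0 y0 + c y0 y" "c y0 y = c y y0"
        using cm xy x0 y0 unfolding is_metric_on_def by blast+
      then show ?thesis by linarith
    qed
    have "c x y powr p \<le> 3 powr p * (c x x0 powr p + c x0 y0 powr p + c y y0 powr p)"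
      using tri p xy x0 y0 c_nonneg[OF cm] by (intro pow3) auto
    then show ?thesis using xy z unfolding h_def F_def H_def V_def
      by (simp add: ennreal_mult[symmetric] ennreal_plus[symmetric] del: ennreal_plus)
  next
    case False
    then show ?thesis unfolding h_def by simp
  qed
  have "OTval \<Omega> c p a b \<le> tcost \<Omega> c p \<gamma>"
    unfolding OTval_def using g by (rule INF_lower)
  also have "\<dots> = (\<integral>\<^sup>+z. h z \<partial>\<gamma>)" unfolding tcost_def h_def ..
  also have "\<dots> \<le> (\<integral>\<^sup>+z. ennreal (3 powr p) * (F (fst z) + V + H (snd z)) \<partial>\<gamma>)"
    by (intro nn_integral_mono pt)
  also have "\<dots> = ennreal (3 powr p) * ((\<integral>\<^sup>+z. F (fst z) \<partial>\<gamma>) + V + (\<integral>\<^sup>+z. H (snd z) \<partial>\<gamma>))"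
  proof -
    have m1: "(\<lambda>z. F (fst z)) \<in> borel_measurable \<gamma>" using measurable_compose[OF fstm(1) Fm] .
    have m2: "(\<lambda>z. H (snd z)) \<in> borel_measurable \<gamma>" using measurable_compose[OF fstm(2) Hm] .
    have "(\<integral>\<^sup>+z. ennreal (3 powr p) * (F (fst z) + V + H (snd z)) \<partial>\<gamma>)
        = ennreal (3 powr p) * (\<integral>\<^sup>+z. (F (fst z) + V) + H (snd z) \<partial>\<gamma>)"
      using m1 m2 by (simp add: nn_integral_cmult)
    also have "(\<integral>\<^sup>+z. (F (fst z) + V) + H (snd z) \<partial>\<gamma>) = (\<integral>\<^sup>+z. F (fst z) + V \<partial>\<gamma>) + (\<integral>\<^sup>+z. H (snd z) \<partial>\<gamma>)"
      using m1 m2 by (simp add: nn_integral_add)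
    also have "(\<integral>\<^sup>+z. F (fst z) + V \<partial>\<gamma>) = (\<integral>\<^sup>+z. F (fst z) \<partial>\<gamma>) + V"
      using m1 gp by (simp add: nn_integral_add prob_space.emeasure_space_1)
    finally show ?thesis .
  qed
  also have "\<dots> < \<infinity>"
    using Ia Ib Fg Hg unfolding F_def H_def V_def
    by (simp add: ennreal_mult_less_top less_top)
  finally show ?thesis .
qed



definition wt :: "(nat \<Rightarrow> real) \<Rightarrow> (nat \<Rightarrow> 'm) \<Rightarrow> nat \<Rightarrow> 'm \<Rightarrow> real" where
  "wt lam a N b = (\<Sum>n<N. if a n = b then lam n else 0)"

lemma wt_nonneg: "(\<And>n. n < N \<Longrightarrow> 0 \<le> lam n) \<Longrightarrow> 0 \<le> wt lam a N b"
  unfolding wt_def by (intro sum_nonneg) auto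

lemma wt_ge: assumes "\<And>n. n < N \<Longrightarrow> 0 \<le> lam n" "j < N" shows "lam j \<le> wt lam a N (a j)"
proof -
  have "lam j = (if a j = a j then lam j else 0)" by simp
  also have "\<dots> \<le> (\<Sum>n<N. if a n = a j then lam n else 0)"
    using assms by (intro member_le_sum) auto
  finally show ?thesis unfolding wt_def .
qed

lemma G3:
  fixes lam \<nu> h :: "nat \<Rightarrow> real" and a :: "nat \<Rightarrow> 'm" and b :: "nat \<Rightarrow> 'm"
  assumes L: "\<And>n. n < N \<Longrightarrow> \<nu> n \<noteq> 0 \<Longrightarrow> wt lam a K (b n) \<noteq> 0"
  shows "(\<Sum>k<K. lam k / wt lam a K (a k) * (\<Sum>n<N. if b n = a k \<and> P n then \<nu> n * h n else 0))
       = (\<Sum>n<N. if P n then \<nu> n * h n else 0)"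
proof -
  let ?L = "wt lam a K"
  define q where "q = (\<lambda>n. \<nu> n * h n / ?L (b n))"
  have "(\<Sum>k<K. lam k / ?L (a k) * (\<Sum>n<N. if b n = a k \<and> P n then \<nu> n * h n else 0))
      = (\<Sum>k<K. \<Sum>n<N. if b n = a k \<and> P n then (if a k = b n then lam k else 0) * q n else 0)"
    unfolding q_def by (auto simp: sum_distrib_left intro!: sum.cong)
  also have "\<dots> = (\<Sum>n<N. \<Sum>k<K. if P n then (if a k = b n then lam k else 0) * q n else 0)"
    by (subst sum.swap) (auto intro!: sum.cong)
  also have "\<dots> = (\<Sum>n<N. if P n then ?L (b n) * q n else 0)"
  proof (intro sum.cong refl)
    fix n
    show "(\<Sum>k<K. if P n then (if a k = b n then lam k else 0) * q n else 0) = (if P n then ?L (b n) * q n else 0)"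
      unfolding wt_def by (simp add: sum_distrib_right)
  qed
  also have "\<dots> = (\<Sum>n<N. if P n then \<nu> n * h n else 0)"
    using L unfolding q_def by (intro sum.cong refl) auto
  finally show ?thesis .
qed

lemma G1:
  fixes lam :: "nat \<Rightarrow> real" and f :: "'m \<Rightarrow> real"
  assumes S: "finite S" and in_S: "\<And>j. j < J \<Longrightarrow> lam j \<noteq> 0 \<Longrightarrow> a j \<in> S"
  shows "(\<Sum>j<J. lam j * f (a j)) = (\<Sum>b\<in>S. wt lam a J b * f b)"
proof -
  have "(\<Sum>b\<in>S. wt lam a J b * f b) = (\<Sum>b\<in>S. \<Sum>j<J. if a j = b then lam j * f b else 0)"
    unfolding wt_def by (auto simp: sum_distrib_right intro!: sum.cong)
  also have "\<dots> = (\<Sum>j<J. \<Sum>b\<in>S. if a j = b then lam j * f b else 0)"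
    by (rule sum.swap)
  also have "\<dots> = (\<Sum>j<J. if a j \<in> S then lam j * f (a j) else 0)"
    using S by (intro sum.cong refl) (simp add: sum.delta)
  also have "\<dots> = (\<Sum>j<J. lam j * f (a j))"
    using in_S by (intro sum.cong refl) auto
  finally show ?thesis by simp
qed

lemma wt_zero:
  assumes "\<And>n. n < N \<Longrightarrow> 0 \<le> lam n" "b \<notin> {a j | j. j < N \<and> 0 < lam j}"
  shows "wt lam a N b = 0"
  unfolding wt_def
proof (intro sum.neutral ballI)
  fix x assume x: "x \<in> {..<N}"
  show "(if a x = b then lam x else 0) = 0"
  proof (cases "a x = b")
    case True
    then have "\<not> 0 < lam x" using assms(2) x by blast
    then show ?thesis using assms(1)[of x] x by simp
  qed simp
qed

lemma canon_rep:
  fixes lam :: "nat \<Rightarrow> real" and a :: "nat \<Rightarrow> 'm"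
  assumes lam: "lam \<in> prob_simplex {..<J}"
  shows "\<exists>(n::nat) e lc. 0 < n \<and> lc \<in> prob_simplex {..<n} \<and> (\<forall>i<n. 0 < lc i \<and> lc i = wt lam a J (e i))
     \<and> inj_on e {..<n} \<and> e ` {..<n} = {a j | j. j < J \<and> 0 < lam j}"
proof -
  define S where "S = {a j | j. j < J \<and> 0 < lam j}"
  have nn: "\<And>j. j < J \<Longrightarrow> 0 \<le> lam j" and s1: "(\<Sum>j<J. lam j) = 1"
    using lam by (auto simp: prob_simplex_def)
  have "S \<subseteq> a ` {..<J}" unfolding S_def by blast
  then have fS: "finite S" using finite_subset by blast
  obtain e where e: "bij_betw e {0..<card S} S" using ex_bij_betw_nat_finite[OF fS] by blast
  define n where "n = card S"
  have e': "bij_betw e {..<n} S" using e unfolding n_def by (simp add: atLeast0LessThan)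
  have inS: "\<And>j. j < J \<Longrightarrow> lam j \<noteq> 0 \<Longrightarrow> a j \<in> S"
  proof -
    fix j assume j: "j < J" "lam j \<noteq> 0"
    then have "0 < lam j" using nn[of j] by linarith
    then show "a j \<in> S" unfolding S_def using j by blast
  qed
  have Sne: "S \<noteq> {}"
  proof
    assume "S = {}"
    then have "\<And>j. j < J \<Longrightarrow> lam j = 0" using inS by (metis empty_iff)
    then show False using s1 by simp
  qed
  have n0: "0 < n" unfolding n_def using fS Sne by (simp add: card_gt_0_iff)
  define lc where "lc = (\<lambda>i. wt lam a J (e i))"
  have sumS: "(\<Sum>b\<in>S. wt lam a J b) = 1"
    using G1[OF fS inS, where f="\<lambda>_. 1"] s1 by simp
  have "(\<Sum>i<n. lc i) = (\<Sum>b\<in>S. wt lam a J b)"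
    unfolding lc_def using sum.reindex_bij_betw[OF e', of "wt lam a J"] .
  then have lcs: "lc \<in> prob_simplex {..<n}"
    using sumS wt_nonneg[OF nn] unfolding prob_simplex_def lc_def by auto
  have pos: "\<And>i. i < n \<Longrightarrow> 0 < lc i"
  proof -
    fix i assume "i < n"
    then have "e i \<in> S" using e' by (meson bij_betwE lessThan_iff)
    then obtain j where j: "j < J" "0 < lam j" "a j = e i" unfolding S_def by auto
    have "lam j \<le> wt lam a J (a j)" using wt_ge[of J lam j a] nn j(1) by blast
    then show "0 < lc i" unfolding lc_def using j by simp
  qed
  have "inj_on e {..<n}" "e ` {..<n} = S" using e' by (auto simp: bij_betw_def)
  then have H: "0 < n \<and> lc \<in> prob_simplex {..<n} \<and> (\<forall>i<n. 0 < lc i \<and> lc i = wt lam a J (e i))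
     \<and> inj_on e {..<n} \<and> e ` {..<n} = {a j | j. j < J \<and> 0 < lam j}"
    using n0 lcs pos unfolding S_def by (simp add: lc_def)
  then show ?thesis by blast
qed

lemma mix_canon:
  fixes lam :: "nat \<Rightarrow> real" and a :: "nat \<Rightarrow> 'b::topological_space measure" and n :: nat
  assumes lam: "lam \<in> prob_simplex {..<J}"
    and pa: "\<And>j. j < J \<Longrightarrow> prob_space (a j) \<and> sets (a j) = sets borel"
    and e: "inj_on e {..<n}" "e ` {..<n} = {a j | j. j < J \<and> 0 < lam j}"
    and lc: "\<And>i. i < n \<Longrightarrow> lc i = wt lam a J (e i)" "lc \<in> prob_simplex {..<n}"
  shows "mix {..<J} lam a = mix {..<n} lc e"
proof (rule mix_eqI)
  fix A :: "'b set" assume A: "A \<in> sets borel"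
  define S where "S = {a j | j. j < J \<and> 0 < lam j}"
  have nn: "\<And>j. j < J \<Longrightarrow> 0 \<le> lam j" using lam by (auto simp: prob_simplex_def)
  have "S \<subseteq> a ` {..<J}" unfolding S_def by blast
  then have fS: "finite S" using finite_subset by blast
  have inS: "\<And>j. j < J \<Longrightarrow> lam j \<noteq> 0 \<Longrightarrow> a j \<in> S"
  proof -
    fix j assume j: "j < J" "lam j \<noteq> 0"
    then have "0 < lam j" using nn[of j] by linarith
    then show "a j \<in> S" unfolding S_def using j by blast
  qed
  have pe: "\<And>i. i < n \<Longrightarrow> prob_space (e i) \<and> sets (e i) = sets borel"
  proof -
    fix i assume "i < n"
    then have "e i \<in> S" using e unfolding S_def by blast
    then obtain j where "j < J" "e i = a j" unfolding S_def by auto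
    then show "prob_space (e i) \<and> sets (e i) = sets borel" using pa by simp
  qed
  have "emeasure (mix {..<J} lam a) A = ennreal (\<Sum>j<J. lam j * measure (a j) A)"
    using pa nn A by (intro emeasure_mix_real) auto
  also have "(\<Sum>j<J. lam j * measure (a j) A) = (\<Sum>b\<in>S. wt lam a J b * measure b A)"
    by (rule G1[OF fS inS])
  also have "\<dots> = (\<Sum>i<n. lc i * measure (e i) A)"
    using sum.reindex[OF e(1), of "\<lambda>b. wt lam a J b * measure b A"] e(2) lc(1) unfolding S_def
    by simp
  also have "ennreal \<dots> = emeasure (mix {..<n} lc e) A"
    using pe lc(2) A by (intro emeasure_mix_real[symmetric]) (auto simp: prob_simplex_def)
  finally show "emeasure (mix {..<J} lam a) A = emeasure (mix {..<n} lc e) A" .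
qed

lemma wt_unique:
  fixes a a' :: "nat \<Rightarrow> 'b::topological_space measure"
  assumes ident: "identifiable \<A>"
    and AP: "\<And>x. x \<in> \<A> \<Longrightarrow> prob_space x \<and> sets x = sets borel"
    and lam: "lam \<in> prob_simplex {..<J}" and a: "\<And>j. j < J \<Longrightarrow> a j \<in> \<A>"
    and lam': "lam' \<in> prob_simplex {..<K}" and a': "\<And>k. k < K \<Longrightarrow> a' k \<in> \<A>"
    and eq: "mix {..<J} lam a = mix {..<K} lam' a'"
  shows "wt lam a J b = wt lam' a' K b"
proof -
  obtain n :: nat and e lc where n: "0 < n" "lc \<in> prob_simplex {..<n}" "\<forall>i<n. 0 < lc i \<and> lc i = wt lam a J (e i)"
    "inj_on e {..<n}" "e ` {..<n} = {a j | j. j < J \<and> 0 < lam j}"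
    using canon_rep[OF lam, where a=a] by blast
  obtain n' :: nat and e' lc' where n': "0 < n'" "lc' \<in> prob_simplex {..<n'}" "\<forall>i<n'. 0 < lc' i \<and> lc' i = wt lam' a' K (e' i)"
    "inj_on e' {..<n'}" "e' ` {..<n'} = {a' j | j. j < K \<and> 0 < lam' j}"
    using canon_rep[OF lam', where a=a'] by blast
  have m1: "mix {..<J} lam a = mix {..<n} lc e"
  proof (rule mix_canon[OF lam])
    show "\<And>j. j < J \<Longrightarrow> prob_space (a j) \<and> sets (a j) = sets borel" using AP a by blast
  qed (use n in auto)
  have m2: "mix {..<K} lam' a' = mix {..<n'} lc' e'"
  proof (rule mix_canon[OF lam'])
    show "\<And>j. j < K \<Longrightarrow> prob_space (a' j) \<and> sets (a' j) = sets borel" using AP a' by blast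
  qed (use n' in auto)
  have eA: "\<forall>i<n. e i \<in> \<A>"
  proof (intro allI impI)
    fix i assume i: "i < n"
    have "e i \<in> e ` {..<n}" using i by simp
    then obtain j where "j < J" "e i = a j" using n(5) by auto
    then show "e i \<in> \<A>" using a by simp
  qed
  have eA': "\<forall>i<n'. e' i \<in> \<A>"
  proof (intro allI impI)
    fix i assume i: "i < n'"
    have "e' i \<in> e' ` {..<n'}" using i by simp
    then obtain j where "j < K" "e' i = a' j" using n'(5) by auto
    then show "e' i \<in> \<A>" using a' by simp
  qed
  have mm: "mix {..<n} lc e = mix {..<n'} lc' e'" using m1 m2 eq by simp
  have H: "0 < n \<and> 0 < n' \<and> lc \<in> prob_simplex {..<n} \<and> (\<forall>j<n. 0 < lc j \<and> e j \<in> \<A>) \<and> inj_on e {..<n} \<and>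
       lc' \<in> prob_simplex {..<n'} \<and> (\<forall>k<n'. 0 < lc' k \<and> e' k \<in> \<A>) \<and> inj_on e' {..<n'} \<and>
       mix {..<n} lc e = mix {..<n'} lc' e'"
    using n(1,2,3,4) n'(1,2,3,4) eA eA' mm by auto
  have "n = n' \<and> (\<exists>\<sigma>. \<sigma> permutes {..<n'} \<and> (\<forall>k<n'. lc (\<sigma> k) = lc' k \<and> e (\<sigma> k) = e' k))"
    using ident[unfolded identifiable_def, rule_format, of n n' lc e lc' e', OF H] .
  then obtain \<sigma> where nn': "n = n'" and \<sigma>: "\<sigma> permutes {..<n}" and
    eqs: "\<And>k. k < n \<Longrightarrow> lc (\<sigma> k) = lc' k \<and> e (\<sigma> k) = e' k" by auto
  have nn: "\<And>j. j < J \<Longrightarrow> 0 \<le> lam j" using lam by (auto simp: prob_simplex_def)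
  have nn2: "\<And>j. j < K \<Longrightarrow> 0 \<le> lam' j" using lam' by (auto simp: prob_simplex_def)
  have img: "e ` {..<n} = e' ` {..<n}"
  proof -
    have "e' ` {..<n} = (\<lambda>k. e (\<sigma> k)) ` {..<n}" using eqs by (intro image_cong) auto
    then have "e' ` {..<n} = e ` (\<sigma> ` {..<n})" by (simp add: image_image)
    then show ?thesis using permutes_image[OF \<sigma>] by simp
  qed
  show ?thesis
  proof (cases "b \<in> e ` {..<n}")
    case True
    then obtain k where k: "k < n" "b = e' k" using img by auto
    have "\<sigma> k < n" using permutes_in_image[OF \<sigma>] k by simp
    then have "wt lam a J b = lc (\<sigma> k)" using k eqs[OF k(1)] n(3) by simp
    also have "\<dots> = lc' k" using eqs[OF k(1)] by simp
    also have "\<dots> = wt lam' a' K b" using k n'(3) nn' by simp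
    finally show ?thesis .
  next
    case False
    then have "wt lam a J b = 0" using n(5) by (intro wt_zero[OF nn]) auto
    moreover have "wt lam' a' K b = 0" using False img n'(5) nn' by (intro wt_zero[OF nn2]) auto
    ultimately show ?thesis by simp
  qed
qed



lemma mix_cong_w:
  assumes "\<And>i. i \<in> I \<Longrightarrow> w i \<noteq> 0 \<Longrightarrow> m i = m' i"
  shows "mix I w m = mix I w m'"
proof -
  have "(\<lambda>A. \<Sum>i\<in>I. ennreal (w i) * emeasure (m i) A) = (\<lambda>A. \<Sum>i\<in>I. ennreal (w i) * emeasure (m' i) A)"
  proof (intro ext sum.cong refl)
    fix A i assume "i \<in> I"
    then show "ennreal (w i) * emeasure (m i) A = ennreal (w i) * emeasure (m' i) A"
      using assms by (cases "w i = 0") auto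
  qed
  then show ?thesis unfolding mix_def by simp
qed

lemma mix_const:
  assumes I: "finite I" and w: "w \<in> prob_simplex I" and m: "sets m = sets borel"
  shows "mix I w (\<lambda>_. m) = m"
proof (rule measure_eqI)
  fix A assume "A \<in> sets (mix I w (\<lambda>_. m))"
  then have A: "A \<in> sets borel" by simp
  have "emeasure (mix I w (\<lambda>_. m)) A = (\<Sum>i\<in>I. ennreal (w i) * emeasure m A)"
    using emeasure_mix[OF I _ A] m by simp
  also have "\<dots> = (\<Sum>i\<in>I. ennreal (w i)) * emeasure m A" by (simp add: sum_distrib_right)
  also have "(\<Sum>i\<in>I. ennreal (w i)) = 1" using w by (simp add: prob_simplex_def)
  finally show "emeasure (mix I w (\<lambda>_. m)) A = emeasure m A" by simp
qed (simp add: m)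

lemma fst_snd_borel:
  shows "fst \<in> measurable (borel :: ('a::euclidean_space \<times> 'a) measure) borel"
    and "snd \<in> measurable (borel :: ('a::euclidean_space \<times> 'a) measure) borel"
  using measurable_fst[of "borel :: 'a measure" "borel :: 'a measure"]
    measurable_snd[of "borel :: 'a measure" "borel :: 'a measure"]
  unfolding borel_prod by auto

lemma sum_termwise_ennreal:
  fixes f g :: "nat \<Rightarrow> ennreal"
  assumes fin: "finite S" and le: "\<And>n. n \<in> S \<Longrightarrow> g n \<le> f n" and sle: "sum f S \<le> sum g S"
    and top: "sum g S < \<infinity>" and n0: "n0 \<in> S"
  shows "f n0 = g n0"
proof (rule ccontr)
  assume ne: "f n0 \<noteq> g n0"
  then have lt: "g n0 < f n0" using le[OF n0] by simp
  define Rg where "Rg = sum g (S - {n0})"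
  define Rf where "Rf = sum f (S - {n0})"
  have sg: "sum g S = g n0 + Rg" unfolding Rg_def using sum.remove[OF fin n0] by simp
  have sf: "sum f S = f n0 + Rf" unfolding Rf_def using sum.remove[OF fin n0] by simp
  have RR: "Rg \<le> Rf" unfolding Rg_def Rf_def using le by (intro sum_mono) auto
  have "Rg < \<infinity>" using top sg by (simp add: top.not_eq_extremum)
  then have "Rg + g n0 < Rg + f n0" using lt by (simp add: ennreal_add_left_cancel_less)
  also have "\<dots> \<le> Rf + f n0" using RR by (simp add: add_right_mono)
  finally have "sum g S < sum f S" using sg sf by (simp add: add.commute)
  then show False using sle by simp
qed



context
  fixes \<Omega> :: "'a::euclidean_space set"
    and c :: "'a \<Rightarrow> 'a \<Rightarrow> real"
    and p :: real
    and \<A> :: "'a measure set"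
    and G :: "'a measure \<Rightarrow> 'a measure \<Rightarrow> ('a \<times> 'a) measure set"
    and J K :: nat
    and lam0 lam1 :: "nat \<Rightarrow> real"
    and a0 a1 :: "nat \<Rightarrow> 'a measure"
  assumes Omega_borel: "\<Omega> \<in> sets borel"
    and p_gt: "p > 1"
    and c_metric: "is_metric_on \<Omega> c"
    and c_meas: "(\<lambda>z. c (fst z) (snd z)) \<in> borel_measurable (restrict_space borel (\<Omega> \<times> \<Omega>))"
    and A_sub: "\<A> \<subseteq> Pp \<Omega> c p"
    and opt_exists: "\<forall>b0\<in>\<A>. \<forall>b1\<in>\<A>. opt_plans \<Omega> c p b0 b1 \<noteq> {}"
    and ident: "identifiable \<A>"
    and adm: "admissible \<Omega> c p \<A> G"
    and J_pos: "0 < J" and lam0: "lam0 \<in> prob_simplex {..<J}" and a0: "\<forall>j<J. a0 j \<in> \<A>"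
    and K_pos: "0 < K" and lam1: "lam1 \<in> prob_simplex {..<K}" and a1: "\<forall>k<K. a1 k \<in> \<A>"
begin

lemma AP: "x \<in> \<A> \<Longrightarrow> prob_space x \<and> sets x = sets borel"
  using A_sub unfolding Pp_def prob_on_def by auto

lemma OTfin: "x \<in> \<A> \<Longrightarrow> y \<in> \<A> \<Longrightarrow> OTval \<Omega> c p x y < \<infinity>"
proof -
  assume "x \<in> \<A>" "y \<in> \<A>"
  then have "x \<in> Pp \<Omega> c p" "y \<in> Pp \<Omega> c p" using A_sub by auto
  moreover have "0 < p" using p_gt by simp
  ultimately show ?thesis using OTval_finite[OF Omega_borel c_metric c_meas] by blast
qed

lemma Wpp: "x \<in> \<A> \<Longrightarrow> y \<in> \<A> \<Longrightarrow> ennreal (Wp \<Omega> c p x y powr p) = OTval \<Omega> c p x y"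
proof -
  assume xy: "x \<in> \<A>" "y \<in> \<A>"
  have "Wp \<Omega> c p x y powr p = enn2real (OTval \<Omega> c p x y) powr (1 / p * p)"
    unfolding Wp_def by (simp add: powr_powr)
  also have "\<dots> = enn2real (OTval \<Omega> c p x y)" using p_gt by (cases "enn2real (OTval \<Omega> c p x y) = 0") auto
  finally show ?thesis using OTfin[OF xy] by (simp add: less_top)
qed

lemma Wpp_nonneg: "0 \<le> Wp \<Omega> c p x y powr p" by simp

lemma coup_props:
  assumes "g \<in> couplings x y"
  shows "prob_space g" "sets g = sets borel" "distr g borel fst = x" "distr g borel snd = y"
  using assms unfolding couplings_def by auto

lemma opt_in_G: "x \<in> \<A> \<Longrightarrow> y \<in> \<A> \<Longrightarrow> opt_plans \<Omega> c p x y \<subseteq> G x y"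
  using adm unfolding admissible_def by blast

lemma G_coup: "x \<in> \<A> \<Longrightarrow> y \<in> \<A> \<Longrightarrow> G x y \<subseteq> couplings x y"
  using adm unfolding admissible_def by blast

lemma lam0_nn: "j < J \<Longrightarrow> 0 \<le> lam0 j" using lam0 by (simp add: prob_simplex_def)
lemma lam1_nn: "k < K \<Longrightarrow> 0 \<le> lam1 k" using lam1 by (simp add: prob_simplex_def)

lemma mix_plan:
  assumes w: "w \<in> disc_plans J K lam0 lam1"
    and g: "\<forall>j<J. \<forall>k<K. g j k \<in> opt_plans \<Omega> c p (a0 j) (a1 k)"
  shows "mix ({..<J} \<times> {..<K}) (\<lambda>(j, k). w j k) (\<lambda>(j, k). g j k)
           \<in> couplings (mix {..<J} lam0 a0) (mix {..<K} lam1 a1) \<inter> Gam_mix \<A> G"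
    and "tcost \<Omega> c p (mix ({..<J} \<times> {..<K}) (\<lambda>(j, k). w j k) (\<lambda>(j, k). g j k))
           = ennreal (disc_cost \<Omega> c p J K a0 a1 w)"
proof -
  let ?I = "{..<J} \<times> {..<K}"
  let ?W = "\<lambda>(j, k). w j k"
  let ?g = "\<lambda>(j, k). g j k"
  let ?\<gamma> = "mix ?I ?W ?g"
  have wnn: "\<And>j k. j < J \<Longrightarrow> k < K \<Longrightarrow> 0 \<le> w j k"
    and wrow: "\<And>j. j < J \<Longrightarrow> (\<Sum>k<K. w j k) = lam0 j"
    and wcol: "\<And>k. k < K \<Longrightarrow> (\<Sum>j<J. w j k) = lam1 k"
    using w unfolding disc_plans_def by auto
  have gc: "\<And>j k. j < J \<Longrightarrow> k < K \<Longrightarrow> g j k \<in> couplings (a0 j) (a1 k)"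
    using g unfolding opt_plans_def by auto
  have gI: "\<And>i. i \<in> ?I \<Longrightarrow> sets (?g i) = sets borel \<and> prob_space (?g i)"
  proof -
    fix i assume "i \<in> ?I"
    then obtain j k where "i = (j, k)" "j < J" "k < K" by auto
    then show "sets (?g i) = sets borel \<and> prob_space (?g i)"
      using coup_props(1,2)[OF gc] by simp
  qed
  have Wnn: "\<And>i. i \<in> ?I \<Longrightarrow> 0 \<le> ?W i" using wnn by auto
  have sumW: "(\<Sum>i\<in>?I. ?W i) = 1"
  proof -
    have "(\<Sum>i\<in>?I. ?W i) = (\<Sum>j<J. \<Sum>k<K. w j k)" by (subst sum.cartesian_product) (auto intro!: sum.cong)
    also have "\<dots> = (\<Sum>j<J. lam0 j)" using wrow by simp
    finally show ?thesis using lam0 by (simp add: prob_simplex_def)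
  qed
  have Wsim: "?W \<in> prob_simplex ?I" using wnn sumW by (auto simp: prob_simplex_def)
  have fI: "finite ?I" by simp
  have ps: "prob_space ?\<gamma>" using prob_space_mix[OF fI _ _ Wsim] gI by blast
  have marg1: "distr ?\<gamma> borel fst = mix {..<J} lam0 a0"
  proof -
    have "distr ?\<gamma> borel fst = mix ?I ?W (\<lambda>i. distr (?g i) borel fst)"
      using distr_mix[OF fI _ fst_snd_borel(1)] gI by blast
    also have "\<dots> = mix ?I ?W (\<lambda>(j, k). a0 j)"
      using coup_props(3)[OF gc] by (intro mix_cong_w) auto
    also have "\<dots> = mix {..<J} lam0 a0"
    proof (rule mix_eqI)
      fix A :: "'a set" assume A: "A \<in> sets borel"
      have "emeasure (mix ?I ?W (\<lambda>(j, k). a0 j)) A = (\<Sum>i\<in>?I. ennreal (?W i) * emeasure ((\<lambda>(j, k). a0 j) i) A)"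
        using emeasure_mix[OF fI _ A] AP a0 by auto
      also have "\<dots> = (\<Sum>j<J. \<Sum>k<K. ennreal (w j k) * emeasure (a0 j) A)"
        by (subst sum.cartesian_product) (auto intro!: sum.cong)
      also have "\<dots> = (\<Sum>j<J. ennreal (lam0 j) * emeasure (a0 j) A)"
      proof (intro sum.cong refl)
        fix j assume j: "j \<in> {..<J}"
        have "(\<Sum>k<K. ennreal (w j k) * emeasure (a0 j) A) = (\<Sum>k<K. ennreal (w j k)) * emeasure (a0 j) A"
          by (simp add: sum_distrib_right)
        also have "(\<Sum>k<K. ennreal (w j k)) = ennreal (\<Sum>k<K. w j k)" using wnn j by (intro sum_ennreal) auto
        also have "\<dots> = ennreal (lam0 j)" using wrow j by simp
        finally show "(\<Sum>k<K. ennreal (w j k) * emeasure (a0 j) A) = ennreal (lam0 j) * emeasure (a0 j) A" .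
      qed
      also have "\<dots> = emeasure (mix {..<J} lam0 a0) A"
        using emeasure_mix[OF _ _ A, of "{..<J}" a0 lam0] AP a0 by simp
      finally show "emeasure (mix ?I ?W (\<lambda>(j, k). a0 j)) A = emeasure (mix {..<J} lam0 a0) A" .
    qed
    finally show ?thesis .
  qed
  have marg2: "distr ?\<gamma> borel snd = mix {..<K} lam1 a1"
  proof -
    have "distr ?\<gamma> borel snd = mix ?I ?W (\<lambda>i. distr (?g i) borel snd)"
      using distr_mix[OF fI _ fst_snd_borel(2)] gI by blast
    also have "\<dots> = mix ?I ?W (\<lambda>(j, k). a1 k)"
      using coup_props(4)[OF gc] by (intro mix_cong_w) auto
    also have "\<dots> = mix {..<K} lam1 a1"
    proof (rule mix_eqI)
      fix A :: "'a set" assume A: "A \<in> sets borel"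
      have "emeasure (mix ?I ?W (\<lambda>(j, k). a1 k)) A = (\<Sum>i\<in>?I. ennreal (?W i) * emeasure ((\<lambda>(j, k). a1 k) i) A)"
        using emeasure_mix[OF fI _ A] AP a1 by auto
      also have "\<dots> = (\<Sum>j<J. \<Sum>k<K. ennreal (w j k) * emeasure (a1 k) A)"
        by (subst sum.cartesian_product) (auto intro!: sum.cong)
      also have "\<dots> = (\<Sum>k<K. \<Sum>j<J. ennreal (w j k) * emeasure (a1 k) A)"
        by (rule sum.swap)
      also have "\<dots> = (\<Sum>k<K. ennreal (lam1 k) * emeasure (a1 k) A)"
      proof (intro sum.cong refl)
        fix k assume k: "k \<in> {..<K}"
        have "(\<Sum>j<J. ennreal (w j k) * emeasure (a1 k) A) = (\<Sum>j<J. ennreal (w j k)) * emeasure (a1 k) A"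
          by (simp add: sum_distrib_right)
        also have "(\<Sum>j<J. ennreal (w j k)) = ennreal (\<Sum>j<J. w j k)" using wnn k by (intro sum_ennreal) auto
        also have "\<dots> = ennreal (lam1 k)" using wcol k by simp
        finally show "(\<Sum>j<J. ennreal (w j k) * emeasure (a1 k) A) = ennreal (lam1 k) * emeasure (a1 k) A" .
      qed
      also have "\<dots> = emeasure (mix {..<K} lam1 a1) A"
        using emeasure_mix[OF _ _ A, of "{..<K}" a1 lam1] AP a1 by simp
      finally show "emeasure (mix ?I ?W (\<lambda>(j, k). a1 k)) A = emeasure (mix {..<K} lam1 a1) A" .
    qed
    finally show ?thesis .
  qed
  have coup: "?\<gamma> \<in> couplings (mix {..<J} lam0 a0) (mix {..<K} lam1 a1)"
    unfolding couplings_def using ps marg1 marg2 by simp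
  define h where "h = (\<lambda>n::nat. (n div K, n mod K))"
  have bij: "bij_betw h {..<J * K} ?I"
  proof (rule bij_betw_imageI)
    show "inj_on h {..<J * K}"
    proof (rule inj_onI)
      fix x y assume "h x = h y"
      then have "x div K = y div K" "x mod K = y mod K" by (auto simp: h_def)
      then show "x = y" by (metis div_mult_mod_eq)
    qed
    show "h ` {..<J * K} = ?I"
    proof
      show "h ` {..<J * K} \<subseteq> ?I" unfolding h_def using K_pos
        by (auto simp: less_mult_imp_div_less)
      show "?I \<subseteq> h ` {..<J * K}"
      proof
        fix x assume "x \<in> ?I"
        then obtain j k where x: "x = (j, k)" "j < J" "k < K" by auto
        have "j * K + k < j * K + K" using x by simp
        also have "\<dots> = Suc j * K" by simp
        also have "\<dots> \<le> J * K" using x by (intro mult_le_mono1) simp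
        finally have "j * K + k < J * K" .
        moreover have "h (j * K + k) = x" unfolding h_def using x by simp
        ultimately show "x \<in> h ` {..<J * K}" by (metis image_eqI lessThan_iff)
      qed
    qed
  qed
  have reidx: "\<And>f. (\<Sum>n<J * K. f (h n)) = (\<Sum>i\<in>?I. f i)"
    using sum.reindex_bij_betw[OF bij] by blast
  have hI: "\<And>n. n < J * K \<Longrightarrow> h n \<in> ?I" using bij bij_betwE by blast
  have mixn: "?\<gamma> = mix {..<J * K} (\<lambda>n. ?W (h n)) (\<lambda>n. ?g (h n))"
  proof (rule mix_eqI)
    fix A :: "('a \<times> 'a) set" assume A: "A \<in> sets borel"
    have "emeasure ?\<gamma> A = (\<Sum>i\<in>?I. ennreal (?W i) * emeasure (?g i) A)"
      using emeasure_mix[OF fI _ A] gI by blast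
    also have "\<dots> = (\<Sum>n<J * K. ennreal (?W (h n)) * emeasure (?g (h n)) A)"
      using reidx[of "\<lambda>i. ennreal (?W i) * emeasure (?g i) A"] by simp
    also have "\<dots> = emeasure (mix {..<J * K} (\<lambda>n. ?W (h n)) (\<lambda>n. ?g (h n))) A"
      using emeasure_mix[OF _ _ A, of "{..<J * K}" "\<lambda>n. ?g (h n)"] gI hI by simp
    finally show "emeasure ?\<gamma> A = emeasure (mix {..<J * K} (\<lambda>n. ?W (h n)) (\<lambda>n. ?g (h n))) A" .
  qed
  have gam: "?\<gamma> \<in> Gam_mix \<A> G"
  proof -
    have "0 < J * K" using J_pos K_pos by simp
    moreover have "(\<lambda>n. ?W (h n)) \<in> prob_simplex {..<J * K}"
      using reidx[of ?W] sumW Wnn hI by (simp add: prob_simplex_def)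
    moreover have "\<forall>n<J * K. ?g (h n) \<in> Gam_all \<A> G"
    proof (intro allI impI)
      fix n assume "n < J * K"
      then obtain j k where jk: "h n = (j, k)" "j < J" "k < K" using hI by fastforce
      then have "g j k \<in> G (a0 j) (a1 k)" using g opt_in_G a0 a1 by blast
      then show "?g (h n) \<in> Gam_all \<A> G" unfolding Gam_all_def using jk a0 a1 by auto
    qed
    ultimately show ?thesis unfolding Gam_mix_def mixtures_def mem_Collect_eq using mixn
      by (intro exI[of _ "J * K"] exI[of _ "\<lambda>n. ?W (h n)"] exI[of _ "\<lambda>n. ?g (h n)"]) simp
  qed
  show "?\<gamma> \<in> couplings (mix {..<J} lam0 a0) (mix {..<K} lam1 a1) \<inter> Gam_mix \<A> G"
    using coup gam by simp
  have "tcost \<Omega> c p ?\<gamma> = (\<Sum>i\<in>?I. ennreal (?W i) * tcost \<Omega> c p (?g i))"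
    using tcost_mix[OF Omega_borel c_meas fI] gI by blast
  also have "\<dots> = (\<Sum>j<J. \<Sum>k<K. ennreal (w j k) * tcost \<Omega> c p (g j k))"
    by (subst sum.cartesian_product) (auto intro!: sum.cong)
  also have "\<dots> = (\<Sum>j<J. \<Sum>k<K. ennreal (w j k * Wp \<Omega> c p (a0 j) (a1 k) powr p))"
  proof (intro sum.cong refl)
    fix j k assume j: "j \<in> {..<J}" and k: "k \<in> {..<K}"
    have "tcost \<Omega> c p (g j k) = OTval \<Omega> c p (a0 j) (a1 k)" using g j k unfolding opt_plans_def by auto
    also have "\<dots> = ennreal (Wp \<Omega> c p (a0 j) (a1 k) powr p)" using Wpp a0 a1 j k by simp
    finally show "ennreal (w j k) * tcost \<Omega> c p (g j k) = ennreal (w j k * Wp \<Omega> c p (a0 j) (a1 k) powr p)"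
      using wnn j k by (simp add: ennreal_mult)
  qed
  also have "\<dots> = ennreal (disc_cost \<Omega> c p J K a0 a1 w)"
  proof -
    have nn: "\<And>j k. j < J \<Longrightarrow> k < K \<Longrightarrow> 0 \<le> w j k * Wp \<Omega> c p (a0 j) (a1 k) powr p"
      using wnn by simp
    have "(\<Sum>j<J. \<Sum>k<K. ennreal (w j k * Wp \<Omega> c p (a0 j) (a1 k) powr p))
        = (\<Sum>j<J. ennreal (\<Sum>k<K. w j k * Wp \<Omega> c p (a0 j) (a1 k) powr p))"
      using nn by (intro sum.cong refl sum_ennreal) auto
    also have "\<dots> = ennreal (\<Sum>j<J. \<Sum>k<K. w j k * Wp \<Omega> c p (a0 j) (a1 k) powr p)"
      using nn by (intro sum_ennreal sum_nonneg) auto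
    finally show ?thesis unfolding disc_cost_def .
  qed
  finally show "tcost \<Omega> c p ?\<gamma> = ennreal (disc_cost \<Omega> c p J K a0 a1 w)" .
qed


lemma decomp:
  assumes \<gamma>: "\<gamma> \<in> couplings (mix {..<J} lam0 a0) (mix {..<K} lam1 a1) \<inter> Gam_mix \<A> G"
  shows "\<exists>w \<in> disc_plans J K lam0 lam1. ennreal (disc_cost \<Omega> c p J K a0 a1 w) \<le> tcost \<Omega> c p \<gamma> \<and>
     (tcost \<Omega> c p \<gamma> \<le> ennreal (disc_cost \<Omega> c p J K a0 a1 w) \<longrightarrow>
       (\<exists>g. (\<forall>j<J. \<forall>k<K. g j k \<in> opt_plans \<Omega> c p (a0 j) (a1 k)) \<and>
            \<gamma> = mix ({..<J} \<times> {..<K}) (\<lambda>(j, k). w j k) (\<lambda>(j, k). g j k)))"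
proof -
  obtain N :: nat and \<nu> \<gamma>s where N: "0 < N" and \<nu>: "\<nu> \<in> prob_simplex {..<N}"
    and \<gamma>s: "\<forall>n<N. \<gamma>s n \<in> Gam_all \<A> G" and \<gamma>eq: "\<gamma> = mix {..<N} \<nu> \<gamma>s"
  proof -
    have "\<gamma> \<in> mixtures (Gam_all \<A> G)" using \<gamma> unfolding Gam_mix_def by simp
    then show ?thesis using that unfolding mixtures_def by blast
  qed
  have "\<forall>n\<in>{..<N}. \<exists>xy. fst xy \<in> \<A> \<and> snd xy \<in> \<A> \<and> \<gamma>s n \<in> G (fst xy) (snd xy)"
  proof
    fix n assume "n \<in> {..<N}"
    then have "\<gamma>s n \<in> Gam_all \<A> G" using \<gamma>s by simp
    then obtain x y where "x \<in> \<A>" "y \<in> \<A>" "\<gamma>s n \<in> G x y" unfolding Gam_all_def by blast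
    then show "\<exists>xy. fst xy \<in> \<A> \<and> snd xy \<in> \<A> \<and> \<gamma>s n \<in> G (fst xy) (snd xy)"
      by (intro exI[of _ "(x, y)"]) simp
  qed
  from bchoice[OF this] obtain f where f: "\<forall>n\<in>{..<N}. fst (f n) \<in> \<A> \<and> snd (f n) \<in> \<A> \<and> \<gamma>s n \<in> G (fst (f n)) (snd (f n))"
    by blast
  define b0 where "b0 = (\<lambda>n. fst (f n))"
  define b1 where "b1 = (\<lambda>n. snd (f n))"
  have b0A: "\<And>n. n < N \<Longrightarrow> b0 n \<in> \<A>" and b1A: "\<And>n. n < N \<Longrightarrow> b1 n \<in> \<A>"
    using f unfolding b0_def b1_def by auto
  have \<gamma>sc: "\<And>n. n < N \<Longrightarrow> \<gamma>s n \<in> couplings (b0 n) (b1 n)"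
  proof -
    fix n assume n: "n < N"
    then have "\<gamma>s n \<in> G (b0 n) (b1 n)" using f unfolding b0_def b1_def by simp
    then show "\<gamma>s n \<in> couplings (b0 n) (b1 n)" using G_coup[OF b0A[OF n] b1A[OF n]] by blast
  qed
  have \<gamma>sP: "\<And>n. n < N \<Longrightarrow> sets (\<gamma>s n) = sets borel \<and> prob_space (\<gamma>s n)"
    using coup_props(1,2)[OF \<gamma>sc] by blast
  have \<nu>nn: "\<And>n. n < N \<Longrightarrow> 0 \<le> \<nu> n" using \<nu> by (simp add: prob_simplex_def)
  have \<gamma>c: "\<gamma> \<in> couplings (mix {..<J} lam0 a0) (mix {..<K} lam1 a1)" using \<gamma> by simp
  have fN: "finite {..<N}" by simp
  have m0: "mix {..<N} \<nu> b0 = mix {..<J} lam0 a0"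
  proof -
    have "mix {..<J} lam0 a0 = distr \<gamma> borel fst" using coup_props(3)[OF \<gamma>c] by simp
    also have "\<dots> = mix {..<N} \<nu> (\<lambda>n. distr (\<gamma>s n) borel fst)"
      unfolding \<gamma>eq using distr_mix[OF fN _ fst_snd_borel(1)] \<gamma>sP by blast
    also have "\<dots> = mix {..<N} \<nu> b0"
      using coup_props(3)[OF \<gamma>sc] by (intro mix_cong_w) auto
    finally show ?thesis by simp
  qed
  have m1: "mix {..<N} \<nu> b1 = mix {..<K} lam1 a1"
  proof -
    have "mix {..<K} lam1 a1 = distr \<gamma> borel snd" using coup_props(4)[OF \<gamma>c] by simp
    also have "\<dots> = mix {..<N} \<nu> (\<lambda>n. distr (\<gamma>s n) borel snd)"
      unfolding \<gamma>eq using distr_mix[OF fN _ fst_snd_borel(2)] \<gamma>sP by blast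
    also have "\<dots> = mix {..<N} \<nu> b1"
      using coup_props(4)[OF \<gamma>sc] by (intro mix_cong_w) auto
    finally show ?thesis by simp
  qed
  have wt0: "\<And>B. wt \<nu> b0 N B = wt lam0 a0 J B"
    using wt_unique[OF ident AP \<nu> b0A lam0 _ m0] a0 by blast
  have wt1: "\<And>B. wt \<nu> b1 N B = wt lam1 a1 K B"
    using wt_unique[OF ident AP \<nu> b1A lam1 _ m1] a1 by blast
  define L0 where "L0 = wt lam0 a0 J"
  define L1 where "L1 = wt lam1 a1 K"
  have L0nn: "\<And>B. 0 \<le> L0 B" unfolding L0_def using lam0_nn by (intro wt_nonneg) auto
  have L1nn: "\<And>B. 0 \<le> L1 B" unfolding L1_def using lam1_nn by (intro wt_nonneg) auto
  have L0pos: "\<And>n. n < N \<Longrightarrow> \<nu> n \<noteq> 0 \<Longrightarrow> wt lam0 a0 J (b0 n) \<noteq> 0"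
  proof -
    fix n assume n: "n < N" "\<nu> n \<noteq> 0"
    have "\<nu> n \<le> wt \<nu> b0 N (b0 n)" using wt_ge[of N \<nu> n b0] \<nu>nn n by blast
    then show "wt lam0 a0 J (b0 n) \<noteq> 0" using wt0 \<nu>nn[OF n(1)] n(2) by simp
  qed
  have L1pos: "\<And>n. n < N \<Longrightarrow> \<nu> n \<noteq> 0 \<Longrightarrow> wt lam1 a1 K (b1 n) \<noteq> 0"
  proof -
    fix n assume n: "n < N" "\<nu> n \<noteq> 0"
    have "\<nu> n \<le> wt \<nu> b1 N (b1 n)" using wt_ge[of N \<nu> n b1] \<nu>nn n by blast
    then show "wt lam1 a1 K (b1 n) \<noteq> 0" using wt1 \<nu>nn[OF n(1)] n(2) by simp
  qed
  have inner: "\<And>h P. (\<Sum>k<K. lam1 k / L1 (a1 k) * (\<Sum>n<N. if b1 n = a1 k \<and> P n then \<nu> n * h n else 0))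
      = (\<Sum>n<N. if P n then \<nu> n * h n else 0)"
    unfolding L1_def using L1pos by (intro G3) auto
  have outer: "\<And>h P. (\<Sum>j<J. lam0 j / L0 (a0 j) * (\<Sum>n<N. if b0 n = a0 j \<and> P n then \<nu> n * h n else 0))
      = (\<Sum>n<N. if P n then \<nu> n * h n else 0)"
    unfolding L0_def using L0pos by (intro G3) auto
  have G2: "\<And>h. (\<Sum>j<J. \<Sum>k<K. lam0 j / L0 (a0 j) * (lam1 k / L1 (a1 k) *
        (\<Sum>n<N. if b1 n = a1 k \<and> b0 n = a0 j then \<nu> n * h n else 0))) = (\<Sum>n<N. \<nu> n * h n)"
  proof -
    fix h
    have "(\<Sum>j<J. \<Sum>k<K. lam0 j / L0 (a0 j) * (lam1 k / L1 (a1 k) *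
        (\<Sum>n<N. if b1 n = a1 k \<and> b0 n = a0 j then \<nu> n * h n else 0)))
      = (\<Sum>j<J. lam0 j / L0 (a0 j) * (\<Sum>k<K. lam1 k / L1 (a1 k) *
        (\<Sum>n<N. if b1 n = a1 k \<and> b0 n = a0 j then \<nu> n * h n else 0)))"
      by (simp add: sum_distrib_left)
    also have "\<dots> = (\<Sum>j<J. lam0 j / L0 (a0 j) * (\<Sum>n<N. if b0 n = a0 j \<and> True then \<nu> n * h n else 0))"
      by (simp only: inner simp_thms)
    also have "\<dots> = (\<Sum>n<N. if True then \<nu> n * h n else 0)" by (rule outer)
    finally show "?thesis h" by simp
  qed
  define Q where "Q = (\<lambda>j k. \<Sum>n<N. if b1 n = a1 k \<and> b0 n = a0 j then \<nu> n else 0)"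
  have Qnn: "\<And>j k. 0 \<le> Q j k" unfolding Q_def using \<nu>nn by (intro sum_nonneg) auto
  define w where "w = (\<lambda>j k. lam0 j / L0 (a0 j) * (lam1 k / L1 (a1 k) * Q j k))"
  have wnn: "\<And>j k. j < J \<Longrightarrow> k < K \<Longrightarrow> 0 \<le> w j k"
    unfolding w_def using lam0_nn lam1_nn L0nn L1nn Qnn by (intro mult_nonneg_nonneg divide_nonneg_nonneg) auto
  have wrow: "\<And>j. j < J \<Longrightarrow> (\<Sum>k<K. w j k) = lam0 j"
  proof -
    fix j assume j: "j < J"
    have "(\<Sum>k<K. w j k) = lam0 j / L0 (a0 j) * (\<Sum>k<K. lam1 k / L1 (a1 k) * (\<Sum>n<N. if b1 n = a1 k \<and> b0 n = a0 j then \<nu> n * 1 else 0))"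
      unfolding w_def Q_def by (simp only: mult_1_right sum_distrib_left)
    also have "\<dots> = lam0 j / L0 (a0 j) * (\<Sum>n<N. if b0 n = a0 j then \<nu> n * 1 else 0)"
      using inner[where h="\<lambda>_. 1" and P="\<lambda>n. b0 n = a0 j"] by simp
    also have "(\<Sum>n<N. if b0 n = a0 j then \<nu> n * 1 else 0) = wt \<nu> b0 N (a0 j)"
      unfolding wt_def by (intro sum.cong) auto
    also have "\<dots> = L0 (a0 j)" unfolding L0_def by (rule wt0)
    also have "lam0 j / L0 (a0 j) * L0 (a0 j) = lam0 j"
    proof (cases "L0 (a0 j) = 0")
      case True
      have "lam0 j \<le> L0 (a0 j)" unfolding L0_def using wt_ge[of J lam0 j a0] lam0_nn j by blast
      then show ?thesis using True lam0_nn[OF j] by simp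
    qed simp
    finally show "(\<Sum>k<K. w j k) = lam0 j" .
  qed
  have wcol: "\<And>k. k < K \<Longrightarrow> (\<Sum>j<J. w j k) = lam1 k"
  proof -
    fix k assume k: "k < K"
    have "(\<Sum>j<J. w j k) = lam1 k / L1 (a1 k) * (\<Sum>j<J. lam0 j / L0 (a0 j) * (\<Sum>n<N. if b0 n = a0 j \<and> b1 n = a1 k then \<nu> n * 1 else 0))"
      unfolding w_def Q_def by (simp only: mult_1_right sum_distrib_left conj_commute mult.left_commute)
    also have "\<dots> = lam1 k / L1 (a1 k) * (\<Sum>n<N. if b1 n = a1 k then \<nu> n * 1 else 0)"
      using outer[where h="\<lambda>_. 1" and P="\<lambda>n. b1 n = a1 k"] by simp
    also have "(\<Sum>n<N. if b1 n = a1 k then \<nu> n * 1 else 0) = wt \<nu> b1 N (a1 k)"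
      unfolding wt_def by (intro sum.cong) auto
    also have "\<dots> = L1 (a1 k)" unfolding L1_def by (rule wt1)
    also have "lam1 k / L1 (a1 k) * L1 (a1 k) = lam1 k"
    proof (cases "L1 (a1 k) = 0")
      case True
      have "lam1 k \<le> L1 (a1 k)" unfolding L1_def using wt_ge[of K lam1 k a1] lam1_nn k by blast
      then show ?thesis using True lam1_nn[OF k] by simp
    qed simp
    finally show "(\<Sum>j<J. w j k) = lam1 k" .
  qed
  have wD: "w \<in> disc_plans J K lam0 lam1"
    unfolding disc_plans_def using wnn wrow wcol by blast
  define C where "C = (\<lambda>x y. Wp \<Omega> c p x y powr p)"
  have cost: "disc_cost \<Omega> c p J K a0 a1 w = (\<Sum>n<N. \<nu> n * C (b0 n) (b1 n))"
  proof -
    have "disc_cost \<Omega> c p J K a0 a1 w = (\<Sum>j<J. \<Sum>k<K. lam0 j / L0 (a0 j) * (lam1 k / L1 (a1 k) *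
        (\<Sum>n<N. if b1 n = a1 k \<and> b0 n = a0 j then \<nu> n * C (b0 n) (b1 n) else 0)))"
      unfolding disc_cost_def
    proof (intro sum.cong refl)
      fix j k
      have "Q j k * C (a0 j) (a1 k) = (\<Sum>n<N. if b1 n = a1 k \<and> b0 n = a0 j then \<nu> n * C (b0 n) (b1 n) else 0)"
        unfolding Q_def by (auto simp: sum_distrib_right intro!: sum.cong)
      then show "w j k * Wp \<Omega> c p (a0 j) (a1 k) powr p = lam0 j / L0 (a0 j) * (lam1 k / L1 (a1 k) *
        (\<Sum>n<N. if b1 n = a1 k \<and> b0 n = a0 j then \<nu> n * C (b0 n) (b1 n) else 0))"
        unfolding w_def C_def by (simp add: mult.assoc)
    qed
    also have "\<dots> = (\<Sum>n<N. \<nu> n * C (b0 n) (b1 n))" by (rule G2)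
    finally show ?thesis .
  qed
  have Cenn: "\<And>n. n < N \<Longrightarrow> ennreal (C (b0 n) (b1 n)) = OTval \<Omega> c p (b0 n) (b1 n)"
    unfolding C_def using Wpp b0A b1A by blast
  have OTle: "\<And>n. n < N \<Longrightarrow> OTval \<Omega> c p (b0 n) (b1 n) \<le> tcost \<Omega> c p (\<gamma>s n)"
    unfolding OTval_def using \<gamma>sc by (rule INF_lower)
  have sumg: "ennreal (disc_cost \<Omega> c p J K a0 a1 w) = (\<Sum>n<N. ennreal (\<nu> n) * OTval \<Omega> c p (b0 n) (b1 n))"
  proof -
    have "ennreal (\<Sum>n<N. \<nu> n * C (b0 n) (b1 n)) = (\<Sum>n<N. ennreal (\<nu> n * C (b0 n) (b1 n)))"
      using \<nu>nn by (intro sum_ennreal[symmetric]) (simp add: C_def)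
    also have "\<dots> = (\<Sum>n<N. ennreal (\<nu> n) * OTval \<Omega> c p (b0 n) (b1 n))"
      using Cenn \<nu>nn by (intro sum.cong refl) (simp add: ennreal_mult C_def)
    finally show ?thesis using cost by simp
  qed
  have tc: "tcost \<Omega> c p \<gamma> = (\<Sum>n<N. ennreal (\<nu> n) * tcost \<Omega> c p (\<gamma>s n))"
    unfolding \<gamma>eq using tcost_mix[OF Omega_borel c_meas fN] \<gamma>sP by blast
  have part1: "ennreal (disc_cost \<Omega> c p J K a0 a1 w) \<le> tcost \<Omega> c p \<gamma>"
    unfolding sumg tc using OTle by (intro sum_mono mult_left_mono) auto
  have part2: "\<exists>g. (\<forall>j<J. \<forall>k<K. g j k \<in> opt_plans \<Omega> c p (a0 j) (a1 k)) \<and>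
            \<gamma> = mix ({..<J} \<times> {..<K}) (\<lambda>(j, k). w j k) (\<lambda>(j, k). g j k)"
    if le: "tcost \<Omega> c p \<gamma> \<le> ennreal (disc_cost \<Omega> c p J K a0 a1 w)"
  proof -
    have opt: "\<gamma>s n \<in> opt_plans \<Omega> c p (b0 n) (b1 n)" if n: "n < N" "\<nu> n \<noteq> 0" for n
    proof -
      have eq: "ennreal (\<nu> n) * tcost \<Omega> c p (\<gamma>s n) = ennreal (\<nu> n) * OTval \<Omega> c p (b0 n) (b1 n)"
      proof (rule sum_termwise_ennreal[OF fN])
        show "\<And>m. m \<in> {..<N} \<Longrightarrow> ennreal (\<nu> m) * OTval \<Omega> c p (b0 m) (b1 m) \<le> ennreal (\<nu> m) * tcost \<Omega> c p (\<gamma>s m)"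
          using OTle by (intro mult_left_mono) auto
        show "(\<Sum>m<N. ennreal (\<nu> m) * tcost \<Omega> c p (\<gamma>s m)) \<le> (\<Sum>m<N. ennreal (\<nu> m) * OTval \<Omega> c p (b0 m) (b1 m))"
          using le tc sumg by simp
        show "(\<Sum>m<N. ennreal (\<nu> m) * OTval \<Omega> c p (b0 m) (b1 m)) < \<infinity>"
          using sumg[symmetric] by simp
      qed (use n in simp)
      have "0 < \<nu> n" using \<nu>nn[OF n(1)] n(2) by simp
      then have "tcost \<Omega> c p (\<gamma>s n) = OTval \<Omega> c p (b0 n) (b1 n)"
        using eq by (simp add: ennreal_mult_cancel_left)
      then show ?thesis unfolding opt_plans_def using \<gamma>sc[OF n(1)] by simp
    qed
    define \<rho> where "\<rho> = (\<lambda>j k n. if b1 n = a1 k \<and> b0 n = a0 j then \<nu> n / Q j k else 0)"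
    define gp where "gp = (\<lambda>j k. if 0 < Q j k then mix {..<N} (\<rho> j k) \<gamma>s else (SOME x. x \<in> opt_plans \<Omega> c p (a0 j) (a1 k)))"
    have \<rho>sum: "\<And>j k. (\<Sum>n<N. \<rho> j k n) = Q j k / Q j k"
    proof -
      fix j k
      have "(\<Sum>n<N. \<rho> j k n) = (\<Sum>n<N. (if b1 n = a1 k \<and> b0 n = a0 j then \<nu> n else 0) / Q j k)"
        unfolding \<rho>_def by (intro sum.cong) auto
      also have "\<dots> = Q j k / Q j k" unfolding Q_def by (simp only: sum_divide_distrib)
      finally show "(\<Sum>n<N. \<rho> j k n) = Q j k / Q j k" .
    qed
    have gpopt: "gp j k \<in> opt_plans \<Omega> c p (a0 j) (a1 k)" if jk: "j < J" "k < K" for j k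
    proof (cases "0 < Q j k")
      case True
      have \<rho>sim: "\<rho> j k \<in> prob_simplex {..<N}"
        using \<rho>sum[of j k] True \<nu>nn unfolding prob_simplex_def \<rho>_def by auto
      have ps: "prob_space (mix {..<N} (\<rho> j k) \<gamma>s)"
        using prob_space_mix[OF fN _ _ \<rho>sim] \<gamma>sP by blast
      have mg1: "distr (mix {..<N} (\<rho> j k) \<gamma>s) borel fst = a0 j"
      proof -
        have "distr (mix {..<N} (\<rho> j k) \<gamma>s) borel fst = mix {..<N} (\<rho> j k) (\<lambda>n. distr (\<gamma>s n) borel fst)"
          using distr_mix[OF fN _ fst_snd_borel(1)] \<gamma>sP by blast
        also have "\<dots> = mix {..<N} (\<rho> j k) (\<lambda>_. a0 j)"
          using coup_props(3)[OF \<gamma>sc] by (intro mix_cong_w) (auto simp: \<rho>_def split: if_splits)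
        also have "\<dots> = a0 j" using mix_const[OF fN \<rho>sim] AP a0 jk by blast
        finally show ?thesis .
      qed
      have mg2: "distr (mix {..<N} (\<rho> j k) \<gamma>s) borel snd = a1 k"
      proof -
        have "distr (mix {..<N} (\<rho> j k) \<gamma>s) borel snd = mix {..<N} (\<rho> j k) (\<lambda>n. distr (\<gamma>s n) borel snd)"
          using distr_mix[OF fN _ fst_snd_borel(2)] \<gamma>sP by blast
        also have "\<dots> = mix {..<N} (\<rho> j k) (\<lambda>_. a1 k)"
          using coup_props(4)[OF \<gamma>sc] by (intro mix_cong_w) (auto simp: \<rho>_def split: if_splits)
        also have "\<dots> = a1 k" using mix_const[OF fN \<rho>sim] AP a1 jk by blast
        finally show ?thesis .
      qed
      have "tcost \<Omega> c p (mix {..<N} (\<rho> j k) \<gamma>s) = (\<Sum>n<N. ennreal (\<rho> j k n) * tcost \<Omega> c p (\<gamma>s n))"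
        using tcost_mix[OF Omega_borel c_meas fN] \<gamma>sP by blast
      also have "\<dots> = (\<Sum>n<N. ennreal (\<rho> j k n) * OTval \<Omega> c p (a0 j) (a1 k))"
      proof (intro sum.cong refl)
        fix n assume n: "n \<in> {..<N}"
        show "ennreal (\<rho> j k n) * tcost \<Omega> c p (\<gamma>s n) = ennreal (\<rho> j k n) * OTval \<Omega> c p (a0 j) (a1 k)"
        proof (cases "b1 n = a1 k \<and> b0 n = a0 j \<and> \<nu> n \<noteq> 0")
          case True
          then show ?thesis using opt[of n] n unfolding opt_plans_def by auto
        next
          case False
          then have "\<rho> j k n = 0" unfolding \<rho>_def by auto
          then show ?thesis by simp
        qed
      qed
      also have "\<dots> = (\<Sum>n<N. ennreal (\<rho> j k n)) * OTval \<Omega> c p (a0 j) (a1 k)"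
        by (simp add: sum_distrib_right)
      also have "(\<Sum>n<N. ennreal (\<rho> j k n)) = ennreal (\<Sum>n<N. \<rho> j k n)"
        using \<rho>sim by (intro sum_ennreal) (auto simp: prob_simplex_def)
      also have "\<dots> = 1" using \<rho>sim by (simp add: prob_simplex_def)
      finally have "tcost \<Omega> c p (mix {..<N} (\<rho> j k) \<gamma>s) = OTval \<Omega> c p (a0 j) (a1 k)" by simp
      then show ?thesis unfolding gp_def opt_plans_def couplings_def using True ps mg1 mg2 by simp
    next
      case False
      then show ?thesis unfolding gp_def using opt_exists a0 a1 jk by (simp add: some_in_eq)
    qed
    have gpP: "\<And>j k. j < J \<Longrightarrow> k < K \<Longrightarrow> prob_space (gp j k) \<and> sets (gp j k) = sets borel"
      using gpopt coup_props(1,2) unfolding opt_plans_def by blast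
    let ?I = "{..<J} \<times> {..<K}"
    have "\<gamma> = mix ?I (\<lambda>(j, k). w j k) (\<lambda>(j, k). gp j k)"
    proof (rule measure_eqI)
      show "sets \<gamma> = sets (mix ?I (\<lambda>(j, k). w j k) (\<lambda>(j, k). gp j k))" using coup_props(2)[OF \<gamma>c] by simp
      fix A :: "('a \<times> 'a) set" assume "A \<in> sets \<gamma>"
      then have A: "A \<in> sets borel" using coup_props(2)[OF \<gamma>c] by simp
      have "emeasure \<gamma> A = ennreal (\<Sum>n<N. \<nu> n * measure (\<gamma>s n) A)"
        unfolding \<gamma>eq using emeasure_mix_real[OF fN _ _ _ A] \<gamma>sP \<nu>nn by blast
      also have "(\<Sum>n<N. \<nu> n * measure (\<gamma>s n) A) = (\<Sum>j<J. \<Sum>k<K. w j k * measure (gp j k) A)"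
        unfolding G2[symmetric]
      proof (intro sum.cong refl)
        fix j k assume j: "j \<in> {..<J}" and k: "k \<in> {..<K}"
        define R where "R = (\<Sum>n<N. if b1 n = a1 k \<and> b0 n = a0 j then \<nu> n * measure (\<gamma>s n) A else 0)"
        have "w j k * measure (gp j k) A = lam0 j / L0 (a0 j) * (lam1 k / L1 (a1 k) * R)"
        proof (cases "0 < Q j k")
          case True
          have "measure (gp j k) A = (\<Sum>n<N. \<rho> j k n * measure (\<gamma>s n) A)"
            unfolding gp_def using True measure_mix_real[OF fN _ _ _ A] \<gamma>sP \<nu>nn Qnn
            unfolding \<rho>_def by auto
          also have "\<dots> = R / Q j k"
            unfolding R_def \<rho>_def by (auto simp: sum_divide_distrib intro!: sum.cong)
          finally show ?thesis unfolding w_def using True by simp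
        next
          case False
          then have Q0: "Q j k = 0" using Qnn[of j k] by simp
          then have "\<forall>n\<in>{..<N}. (if b1 n = a1 k \<and> b0 n = a0 j then \<nu> n else 0) = 0"
            unfolding Q_def using \<nu>nn by (subst (asm) sum_nonneg_eq_0_iff) auto
          then have "R = 0" unfolding R_def by (intro sum.neutral) (metis lessThan_iff mult_eq_0_iff)
          then show ?thesis unfolding w_def using Q0 by simp
        qed
        then show "lam0 j / L0 (a0 j) * (lam1 k / L1 (a1 k) *
            (\<Sum>n<N. if b1 n = a1 k \<and> b0 n = a0 j then \<nu> n * measure (\<gamma>s n) A else 0)) = w j k * measure (gp j k) A"
          unfolding R_def by simp
      qed
      also have "\<dots> = (\<Sum>i\<in>?I. (\<lambda>(j, k). w j k) i * measure ((\<lambda>(j, k). gp j k) i) A)"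
        by (subst sum.cartesian_product) (auto intro!: sum.cong)
      also have "ennreal \<dots> = emeasure (mix ?I (\<lambda>(j, k). w j k) (\<lambda>(j, k). gp j k)) A"
        using gpP wnn A by (intro emeasure_mix_real[symmetric]) auto
      finally show "emeasure \<gamma> A = emeasure (mix ?I (\<lambda>(j, k). w j k) (\<lambda>(j, k). gp j k)) A" .
    qed
    then show ?thesis using gpopt by blast
  qed
  show ?thesis using wD part1 part2 by blast
qed

end



theorem mainTheorem3:
  fixes \<Omega> :: "'a::euclidean_space set"
    and c :: "'a \<Rightarrow> 'a \<Rightarrow> real"
    and p :: real
    and \<A> :: "'a measure set"
    and G :: "'a measure \<Rightarrow> 'a measure \<Rightarrow> ('a \<times> 'a) measure set"
    and J K :: nat
    and lam0 lam1 :: "nat \<Rightarrow> real"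
    and a0 a1 :: "nat \<Rightarrow> 'a measure"
  assumes Omega_borel: "\<Omega> \<in> sets borel"
    and p_gt: "p > 1"
    and c_metric: "is_metric_on \<Omega> c"
    and c_meas: "(\<lambda>z. c (fst z) (snd z)) \<in> borel_measurable (restrict_space borel (\<Omega> \<times> \<Omega>))"
    and A_sub: "\<A> \<subseteq> Pp \<Omega> c p"
    and opt_exists: "\<forall>b0\<in>\<A>. \<forall>b1\<in>\<A>. opt_plans \<Omega> c p b0 b1 \<noteq> {}"
    and ident: "identifiable \<A>"
    and adm: "admissible \<Omega> c p \<A> G"
    and J_pos: "0 < J" and lam0: "lam0 \<in> prob_simplex {..<J}" and a0: "\<forall>j<J. a0 j \<in> \<A>"
    and K_pos: "0 < K" and lam1: "lam1 \<in> prob_simplex {..<K}" and a1: "\<forall>k<K. a1 k \<in> \<A>"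
  shows "delta_tilde \<Omega> c p \<A> G (mix {..<J} lam0 a0) (mix {..<K} lam1 a1)
           = delta_M \<Omega> c p J K lam0 a0 lam1 a1
       \<and> tilde_minimizers \<Omega> c p \<A> G (mix {..<J} lam0 a0) (mix {..<K} lam1 a1)
           = {mix ({..<J} \<times> {..<K}) (\<lambda>(j, k). w j k) (\<lambda>(j, k). g j k) | w g.
                w \<in> disc_minimizers \<Omega> c p J K lam0 a0 lam1 a1 \<and>
                (\<forall>j<J. \<forall>k<K. g j k \<in> opt_plans \<Omega> c p (a0 j) (a1 k))}"
proof -
  note ctx = Omega_borel p_gt c_metric c_meas A_sub opt_exists ident adm J_pos lam0 a0 K_pos lam1 a1
  define S where "S = couplings (mix {..<J} lam0 a0) (mix {..<K} lam1 a1) \<inter> Gam_mix \<A> G"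
  define T where "T = (INF \<gamma>\<in>S. tcost \<Omega> c p \<gamma>)"
  define D where "D = disc_cost \<Omega> c p J K a0 a1 ` disc_plans J K lam0 lam1"
  have l0: "\<And>j. j < J \<Longrightarrow> 0 \<le> lam0 j" and s0: "(\<Sum>j<J. lam0 j) = 1"
    using lam0 by (auto simp: prob_simplex_def)
  have l1: "\<And>k. k < K \<Longrightarrow> 0 \<le> lam1 k" and s1: "(\<Sum>k<K. lam1 k) = 1"
    using lam1 by (auto simp: prob_simplex_def)
  have w0: "(\<lambda>j k. lam0 j * lam1 k) \<in> disc_plans J K lam0 lam1"
    unfolding disc_plans_def using l0 l1 s0 s1
    by (auto simp: sum_distrib_left[symmetric] sum_distrib_right[symmetric])
  have Dne: "D \<noteq> {}" unfolding D_def using w0 by blast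
  have dnn: "\<And>w. w \<in> disc_plans J K lam0 lam1 \<Longrightarrow> 0 \<le> disc_cost \<Omega> c p J K a0 a1 w"
    unfolding disc_cost_def disc_plans_def by (auto intro!: sum_nonneg)
  have Dbdd: "bdd_below D" unfolding D_def bdd_below_def using dnn by blast
  have Dnn: "0 \<le> Inf D" using Dne dnn unfolding D_def by (intro cInf_greatest) auto
  have lower: "\<And>\<gamma>. \<gamma> \<in> S \<Longrightarrow> ennreal (Inf D) \<le> tcost \<Omega> c p \<gamma>"
  proof -
    fix \<gamma> assume "\<gamma> \<in> S"
    then obtain w where w: "w \<in> disc_plans J K lam0 lam1" "ennreal (disc_cost \<Omega> c p J K a0 a1 w) \<le> tcost \<Omega> c p \<gamma>"
      using decomp[OF ctx] unfolding S_def by blast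
    have "Inf D \<le> disc_cost \<Omega> c p J K a0 a1 w" using w(1) Dbdd unfolding D_def by (intro cInf_lower) auto
    then show "ennreal (Inf D) \<le> tcost \<Omega> c p \<gamma>" using w(2) by (meson ennreal_leI order_trans)
  qed
  have upper: "\<And>w. w \<in> disc_plans J K lam0 lam1 \<Longrightarrow> T \<le> ennreal (disc_cost \<Omega> c p J K a0 a1 w)"
  proof -
    fix w assume w: "w \<in> disc_plans J K lam0 lam1"
    define g where "g = (\<lambda>j k. SOME x. x \<in> opt_plans \<Omega> c p (a0 j) (a1 k))"
    have g: "\<forall>j<J. \<forall>k<K. g j k \<in> opt_plans \<Omega> c p (a0 j) (a1 k)"
      unfolding g_def using opt_exists a0 a1 by (simp add: some_in_eq)
    have "mix ({..<J} \<times> {..<K}) (\<lambda>(j, k). w j k) (\<lambda>(j, k). g j k) \<in> S"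
      using mix_plan(1)[OF ctx w g] unfolding S_def .
    then have "T \<le> tcost \<Omega> c p (mix ({..<J} \<times> {..<K}) (\<lambda>(j, k). w j k) (\<lambda>(j, k). g j k))"
      unfolding T_def by (rule INF_lower)
    also have "\<dots> = ennreal (disc_cost \<Omega> c p J K a0 a1 w)" using mix_plan(2)[OF ctx w g] .
    finally show "T \<le> ennreal (disc_cost \<Omega> c p J K a0 a1 w)" .
  qed
  have TD: "T = ennreal (Inf D)"
  proof (rule antisym)
    show "ennreal (Inf D) \<le> T" unfolding T_def using lower by (rule INF_greatest)
    show "T \<le> ennreal (Inf D)"
    proof (rule ccontr)
      assume "\<not> T \<le> ennreal (Inf D)"
      then have lt: "ennreal (Inf D) < T" by simp
      then obtain y where y: "ennreal (Inf D) < y" "y < T" using dense by blast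
      then have "y \<noteq> \<top>" by auto
      then obtain r where r: "0 \<le> r" "y = ennreal r" by (cases y) auto
      then have "Inf D < r" using y(1) Dnn by (simp add: ennreal_less_iff)
      then obtain d where d: "d \<in> D" "d < r" using cInf_lessD[OF Dne] by blast
      then obtain w where w: "w \<in> disc_plans J K lam0 lam1" "d = disc_cost \<Omega> c p J K a0 a1 w"
        unfolding D_def by blast
      have "T \<le> ennreal d" using upper[OF w(1)] w(2) by simp
      also have "\<dots> < ennreal r" using d dnn[OF w(1)] w(2) by (simp add: ennreal_less_iff)
      finally show False using y r by simp
    qed
  qed
  have part1: "delta_tilde \<Omega> c p \<A> G (mix {..<J} lam0 a0) (mix {..<K} lam1 a1) = delta_M \<Omega> c p J K lam0 a0 lam1 a1"
    unfolding delta_tilde_def delta_M_def S_def[symmetric] T_def[symmetric] D_def[symmetric] TD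
    using Dnn by simp
  have part2: "tilde_minimizers \<Omega> c p \<A> G (mix {..<J} lam0 a0) (mix {..<K} lam1 a1)
           = {mix ({..<J} \<times> {..<K}) (\<lambda>(j, k). w j k) (\<lambda>(j, k). g j k) | w g.
                w \<in> disc_minimizers \<Omega> c p J K lam0 a0 lam1 a1 \<and>
                (\<forall>j<J. \<forall>k<K. g j k \<in> opt_plans \<Omega> c p (a0 j) (a1 k))}"
    (is "?L = ?R")
  proof (intro set_eqI iffI)
    fix \<gamma> assume "\<gamma> \<in> ?L"
    then have \<gamma>S: "\<gamma> \<in> S" and \<gamma>T: "tcost \<Omega> c p \<gamma> = T"
      unfolding tilde_minimizers_def S_def[symmetric] T_def[symmetric] by auto
    obtain w where w: "w \<in> disc_plans J K lam0 lam1" "ennreal (disc_cost \<Omega> c p J K a0 a1 w) \<le> tcost \<Omega> c p \<gamma>"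
      and imp: "tcost \<Omega> c p \<gamma> \<le> ennreal (disc_cost \<Omega> c p J K a0 a1 w) \<longrightarrow>
       (\<exists>g. (\<forall>j<J. \<forall>k<K. g j k \<in> opt_plans \<Omega> c p (a0 j) (a1 k)) \<and>
            \<gamma> = mix ({..<J} \<times> {..<K}) (\<lambda>(j, k). w j k) (\<lambda>(j, k). g j k))"
      using decomp[OF ctx \<gamma>S[unfolded S_def]] by blast
    have "disc_cost \<Omega> c p J K a0 a1 w \<le> Inf D" using w(2) \<gamma>T TD Dnn by simp
    moreover have "Inf D \<le> disc_cost \<Omega> c p J K a0 a1 w" using w(1) Dbdd unfolding D_def by (intro cInf_lower) auto
    ultimately have eq: "disc_cost \<Omega> c p J K a0 a1 w = Inf D" by simp
    then have wm: "w \<in> disc_minimizers \<Omega> c p J K lam0 a0 lam1 a1"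
      unfolding disc_minimizers_def D_def[symmetric] using w(1) by simp
    have "tcost \<Omega> c p \<gamma> \<le> ennreal (disc_cost \<Omega> c p J K a0 a1 w)" using \<gamma>T TD eq by simp
    then obtain g where "\<forall>j<J. \<forall>k<K. g j k \<in> opt_plans \<Omega> c p (a0 j) (a1 k)"
      "\<gamma> = mix ({..<J} \<times> {..<K}) (\<lambda>(j, k). w j k) (\<lambda>(j, k). g j k)" using imp by blast
    then show "\<gamma> \<in> ?R" using wm by blast
  next
    fix \<gamma> assume "\<gamma> \<in> ?R"
    then obtain w g where \<gamma>: "\<gamma> = mix ({..<J} \<times> {..<K}) (\<lambda>(j, k). w j k) (\<lambda>(j, k). g j k)"
      and wm: "w \<in> disc_minimizers \<Omega> c p J K lam0 a0 lam1 a1"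
      and g: "\<forall>j<J. \<forall>k<K. g j k \<in> opt_plans \<Omega> c p (a0 j) (a1 k)" by blast
    have w: "w \<in> disc_plans J K lam0 lam1" and wc: "disc_cost \<Omega> c p J K a0 a1 w = Inf D"
      using wm unfolding disc_minimizers_def D_def by auto
    have "\<gamma> \<in> S" using mix_plan(1)[OF ctx w g] \<gamma> unfolding S_def by simp
    moreover have "tcost \<Omega> c p \<gamma> = T" using mix_plan(2)[OF ctx w g] \<gamma> wc TD by simp
    ultimately show "\<gamma> \<in> ?L" unfolding tilde_minimizers_def S_def[symmetric] T_def[symmetric] by simp
  qed
  show ?thesis using part1 part2 by simp
qed

end
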